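(* For $\tau$ in the upper half-plane, $$\frac{(v^2(\tau)+1)^2}{v^4(\tau)-6v^2(\tau)+1}=\frac{4}{\mathfrak{b}^2(4\tau)}.$$
   Context: $q=e^{2\pi i\tau}$, $q^r:=e^{2\pi i r\tau}$. $v(\tau)=q^{1/2}\prod_{n\ge1}(1-q^n)^{\left(\frac{8}{n}\right)}$ with $\left(\frac{8}{n}\right)$ the Kronecker symbol, and $\mathfrak{b}(\tau)=2\prod_{n\ge1}\left(\frac{1-q^{n/2-1/4}}{1+q^{n/2-1/4}}\right)^2$. *)

theory Defs
  imports "HOL-Analysis.Analysis"
begin

definition qpow :: "complex \<Rightarrow> real \<Rightarrow> complex" where
  "qpow \<tau> r = exp (2 * of_real pi * \<i> * of_real r * \<tau>)"

definition kron8 :: "nat \<Rightarrow> int" where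
  "kron8 n = (if even n then 0
              else if n mod 8 = 1 \<or> n mod 8 = 7 then 1 else -1)"

definition v_fun :: "complex \<Rightarrow> complex" where
  "v_fun \<tau> = qpow \<tau> (1/2) *
     (\<Prod>m. (1 - qpow \<tau> (real (Suc m))) powi kron8 (Suc m))"

definition b_fun :: "complex \<Rightarrow> complex" where
  "b_fun \<tau> = 2 *
     (\<Prod>m. ((1 - qpow \<tau> (real (Suc m) / 2 - 1/4)) /
            (1 + qpow \<tau> (real (Suc m) / 2 - 1/4))) ^ 2)"

end

theory Submission
  imports Defs
begin


definition pp :: "(nat \<Rightarrow> complex) \<Rightarrow> complex \<Rightarrow> bool" where
  "pp f L \<longleftrightarrow> (\<lambda>N. \<Prod>n<N. f n) \<longlonglongrightarrow> L"

lemma pp_mult: "pp f L \<Longrightarrow> pp g M \<Longrightarrow> pp (\<lambda>n. f n * g n) (L * M)"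
  unfolding pp_def by (simp add: prod.distrib tendsto_mult)

lemma pp_divide: "pp f L \<Longrightarrow> pp g M \<Longrightarrow> M \<noteq> 0 \<Longrightarrow> pp (\<lambda>n. f n / g n) (L / M)"
  unfolding pp_def by (simp add: prod_dividef tendsto_divide)

lemma pp_power: "pp f L \<Longrightarrow> pp (\<lambda>n. f n ^ k) (L ^ k)"
proof -
  assume "pp f L"
  then have "(\<lambda>N. (\<Prod>n<N. f n) ^ k) \<longlonglongrightarrow> L ^ k" unfolding pp_def by (rule tendsto_power)
  then show ?thesis unfolding pp_def by (simp add: prod_power_distrib)
qed

lemma pp_cong: "pp f L \<Longrightarrow> (\<And>n. f n = g n) \<Longrightarrow> L = M \<Longrightarrow> pp g M"
  unfolding pp_def by simp

lemma pp_unique: "pp f L \<Longrightarrow> pp f M \<Longrightarrow> L = M"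
  unfolding pp_def using LIMSEQ_unique by blast

lemma pp_prod: "finite I \<Longrightarrow> (\<And>i. i \<in> I \<Longrightarrow> pp (f i) (L i)) \<Longrightarrow> pp (\<lambda>n. \<Prod>i\<in>I. f i n) (\<Prod>i\<in>I. L i)"
  unfolding pp_def by (subst prod.swap) (rule tendsto_prod, auto)

lemma pp_group:
  assumes "pp f L" "k > 0"
  shows "pp (\<lambda>m. \<Prod>r<k. f (k*m+r)) L"
proof -
  have "(\<lambda>N. \<Prod>n<N*k. f n) \<longlonglongrightarrow> L"
  proof -
    have "filterlim (\<lambda>N. N*k) sequentially sequentially"
      using assms(2) by (intro filterlim_subseq) (auto simp: strict_mono_def)
    from filterlim_compose[OF assms(1)[unfolded pp_def] this] show ?thesis by (simp add: o_def)
  qed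
  moreover have "(\<Prod>n<N*k. f n) = (\<Prod>m<N. \<Prod>r<k. f (k*m+r))" for N
  proof -
    have "(\<Prod>n<N*k. f n) = (\<Prod>m<N. prod f {m*k..<m*k+k})" by (rule prod.nat_group[symmetric])
    also have "\<dots> = (\<Prod>m<N. \<Prod>r<k. f (k*m+r))"
    proof (rule prod.cong[OF refl])
      fix m
      have "prod f {m*k..<m*k+k} = (\<Prod>r\<in>{0..<k}. f (r + m*k))"
        using prod.shift_bounds_nat_ivl[of f 0 "m*k" k] by (simp add: add.commute)
      then show "prod f {m*k..<m*k+k} = (\<Prod>r<k. f (k*m+r))"
        by (simp add: atLeast0LessThan add.commute mult.commute)
    qed
    finally show ?thesis .
  qed
  ultimately show ?thesis unfolding pp_def by simp
qed

lemma pp_shift: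
  assumes "pp f L" "f 0 \<noteq> 0"
  shows "pp (\<lambda>n. f (Suc n)) (L / f 0)"
proof -
  have "(\<lambda>N. \<Prod>n<Suc N. f n) \<longlonglongrightarrow> L"
    using assms(1) unfolding pp_def by (rule LIMSEQ_Suc)
  then have "(\<lambda>N. (\<Prod>n<Suc N. f n) / f 0) \<longlonglongrightarrow> L / f 0"
    by (intro tendsto_divide) (auto simp: assms)
  moreover have "(\<Prod>n<Suc N. f n) / f 0 = (\<Prod>n<N. f (Suc n))" for N
    using assms(2) by (simp only: prod.lessThan_Suc_shift) simp
  ultimately show ?thesis unfolding pp_def by simp
qed

lemma pp_prodinf:
  fixes f :: "nat \<Rightarrow> complex"
  assumes "summable (\<lambda>n. norm (f n - 1))"
  shows "pp f (prodinf f)" and "(\<And>n. f n \<noteq> 0) \<Longrightarrow> prodinf f \<noteq> 0"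
proof -
  have cp: "convergent_prod f"
    by (rule abs_convergent_prod_imp_convergent_prod[OF summable_imp_abs_convergent_prod[OF assms]])
  have "(\<lambda>n. \<Prod>i\<le>n. f i) \<longlonglongrightarrow> prodinf f" by (rule convergent_prod_LIMSEQ[OF cp])
  then have "(\<lambda>n. \<Prod>i<Suc n. f i) \<longlonglongrightarrow> prodinf f" by (simp add: lessThan_Suc_atMost)
  then show "pp f (prodinf f)" unfolding pp_def by (rule LIMSEQ_imp_Suc)
  assume nz: "\<And>n. f n \<noteq> 0"
  have "f has_prod prodinf f" using cp convergent_prod_has_prod by blast
  from has_prod_eq_0_iff[OF this] nz show "prodinf f \<noteq> 0" by auto
qed

lemma pp_imp_prodinf:
  assumes "pp f L" "L \<noteq> 0"
  shows "prodinf f = L"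
proof -
  have "(\<lambda>n. \<Prod>i<Suc n. f i) \<longlonglongrightarrow> L" using assms(1) unfolding pp_def by (rule LIMSEQ_Suc)
  then have "raw_has_prod f 0 L" unfolding raw_has_prod_def using assms(2)
    by (simp add: lessThan_Suc_atMost)
  then have "f has_prod L" unfolding has_prod_def by blast
  then show ?thesis using has_prod_iff by blast
qed



lemma summable_geom_term:
  fixes x c :: complex
  assumes "norm x < 1" "a > 0"
  shows "summable (\<lambda>n. norm (c * x^(a*n+b)))"
proof -
  have "summable (\<lambda>n. (norm c * norm x ^ b) * (norm x ^ a) ^ n)"
    by (rule summable_mult, rule summable_geometric) (use assms in \<open>simp add: power_less_one_iff\<close>)
  moreover have "norm (c * x^(a*n+b)) = (norm c * norm x ^ b) * (norm x ^ a) ^ n" for n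
    by (simp add: norm_mult norm_power power_add power_mult mult.commute mult.left_commute)
  ultimately show ?thesis by simp
qed

lemma pp_geom:
  fixes x c :: complex
  assumes "norm x < 1" "a > 0"
  shows "pp (\<lambda>n. 1 + c * x^(a*n+b)) (\<Prod>n. 1 + c * x^(a*n+b))"
  by (rule pp_prodinf(1)) (use summable_geom_term[OF assms, of c b] in simp)

definition At :: "complex \<Rightarrow> nat \<Rightarrow> complex" where
  "At x r = (\<Prod>n. 1 - x^(16*n+r))"

lemma norm_pow_lt1: "norm (x::complex) < 1 \<Longrightarrow> m > 0 \<Longrightarrow> norm (x^m) < 1"
  by (simp add: norm_power power_less_one_iff)

lemma one_minus_pow_nz: "norm (x::complex) < 1 \<Longrightarrow> m > 0 \<Longrightarrow> 1 - x^m \<noteq> 0"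
  using norm_pow_lt1[of x m] by auto

lemma one_plus_pow_nz: "norm (x::complex) < 1 \<Longrightarrow> m > 0 \<Longrightarrow> 1 + x^m \<noteq> 0"
proof
  assume "norm x < 1" "m > 0" "1 + x^m = 0"
  then have "x^m = -1" by (simp add: add_eq_0_iff)
  then have "norm (x^m) = 1" by simp
  with norm_pow_lt1[OF \<open>norm x < 1\<close> \<open>m>0\<close>] show False by simp
qed

lemma At_pp:
  assumes "norm x < 1"
  shows "pp (\<lambda>n. 1 - x^(16*n+r)) (At x r)"
  using pp_geom[OF assms, of 16 "-1" r] unfolding At_def by simp

lemma At_nz:
  assumes "norm x < 1" "r > 0"
  shows "At x r \<noteq> 0"
  unfolding At_def
  by (rule pp_prodinf(2)) (use summable_geom_term[OF assms(1), of 16 "-1" r] one_minus_pow_nz[OF assms(1)] assms(2) in auto)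

definition Pm :: "complex \<Rightarrow> nat \<Rightarrow> nat \<Rightarrow> complex" where
  "Pm x a b = (\<Prod>j<16 div a. At x (a*j+b))"

lemma Pm_nz: "norm x < 1 \<Longrightarrow> b > 0 \<Longrightarrow> Pm x a b \<noteq> 0"
  unfolding Pm_def by (auto simp: At_nz)

lemma pp_minus:
  assumes x: "norm x < 1" and ak: "a * k = 16"
  shows "pp (\<lambda>n. 1 - x^(a*n+b)) (Pm x a b)"
proof -
  have a: "a > 0" "k > 0" using ak by (auto intro: gr0I)
  have kk: "16 div a = k" using ak a by (metis nonzero_mult_div_cancel_left less_not_refl2)
  have p0: "pp (\<lambda>n. 1 - x^(a*n+b)) (\<Prod>n. 1 + (-1) * x^(a*n+b))"
    using pp_geom[OF x a(1), of "-1" b] by simp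
  have p1: "pp (\<lambda>m. \<Prod>r<k. 1 - x^(a*(k*m+r)+b)) (\<Prod>n. 1 + (-1) * x^(a*n+b))"
    using pp_group[OF p0 a(2)] by simp
  have p2: "pp (\<lambda>m. \<Prod>r\<in>{..<k}. 1 - x^(16*m+(a*r+b))) (\<Prod>r\<in>{..<k}. At x (a*r+b))"
    by (rule pp_prod) (auto simp: At_pp x)
  have e: "a*(k*m+r)+b = 16*m+(a*r+b)" for m r
    using ak by (simp add: algebra_simps)
  have "(\<Prod>n. 1 + (-1) * x^(a*n+b)) = (\<Prod>r\<in>{..<k}. At x (a*r+b))"
    using p1 p2 by (simp add: e pp_unique)
  then show ?thesis using p0 unfolding Pm_def kk by simp
qed

lemma pp_plus:
  assumes x: "norm x < 1" and ak: "a * k = 16" and k: "even k" and b: "b > 0"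
  shows "pp (\<lambda>n. 1 + x^(a*n+b)) (Pm x (2*a) (2*b) / Pm x a b)"
proof -
  have ak2: "(2*a) * (k div 2) = 16" using ak k by (auto elim!: evenE simp: mult.commute)
  have "pp (\<lambda>n. (1 - x^((2*a)*n+2*b)) / (1 - x^(a*n+b))) (Pm x (2*a) (2*b) / Pm x a b)"
    by (rule pp_divide[OF pp_minus[OF x ak2] pp_minus[OF x ak]]) (use Pm_nz x b in auto)
  moreover have "(1 - x^((2*a)*n+2*b)) / (1 - x^(a*n+b)) = 1 + x^(a*n+b)" for n
  proof -
    have "1 - x^(a*n+b) \<noteq> 0" using one_minus_pow_nz[OF x] b by simp
    moreover have "x^((2*a)*n+2*b) = (x^(a*n+b))^2"
      by (simp add: power_mult[symmetric] algebra_simps)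
    ultimately show ?thesis by (simp add: field_simps power2_eq_square)
  qed
  ultimately show ?thesis by simp
qed



fun cq :: "complex \<Rightarrow> nat \<Rightarrow> nat \<Rightarrow> complex" where
  "cq p 0 k = (if k = 0 then 1 else 0)"
| "cq p (Suc n) 0 = 1"
| "cq p (Suc n) (Suc k) = cq p n (Suc k) + p^(2*n) * cq p n k"

lemma cq_0 [simp]: "cq p n 0 = 1"
  by (cases n) auto

lemma cq_big: "k > n \<Longrightarrow> cq p n k = 0"
proof (induction n arbitrary: k)
  case 0 then show ?case by simp
next
  case (Suc n)
  then obtain k' where "k = Suc k'" by (cases k) auto
  with Suc show ?case by simp
qed

lemma qbin: "(\<Prod>i<n. 1 + y * p^(2*i)) = (\<Sum>k\<le>n. cq p n k * y^k)"
proof (induction n)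
  case 0 then show ?case by simp
next
  case (Suc n)
  have "(\<Sum>k\<le>Suc n. cq p (Suc n) k * y^k) = 1 + (\<Sum>k\<le>n. cq p (Suc n) (Suc k) * y^(Suc k))"
    by (subst sum.atMost_Suc_shift) simp
  also have "\<dots> = 1 + (\<Sum>k\<le>n. cq p n (Suc k) * y^(Suc k)) + y * p^(2*n) * (\<Sum>k\<le>n. cq p n k * y^k)"
    by (simp add: sum.distrib sum_distrib_left algebra_simps)
  also have "1 + (\<Sum>k\<le>n. cq p n (Suc k) * y^(Suc k)) = (\<Sum>k\<le>Suc n. cq p n k * y^k)"
    by (subst sum.atMost_Suc_shift) simp
  also have "\<dots> = (\<Sum>k\<le>n. cq p n k * y^k)"
    by (simp add: cq_big)
  finally show ?case using Suc by (simp add: algebra_simps)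
qed

definition qp :: "complex \<Rightarrow> nat \<Rightarrow> complex" where
  "qp p n = (\<Prod>i<n. 1 - p^(2*i+2))"

lemma qp_Suc: "qp p (Suc n) = qp p n * (1 - p^(2*n+2))"
  unfolding qp_def by simp

lemma qp_0 [simp]: "qp p 0 = 1"
  unfolding qp_def by simp

lemma qp_nz:
  assumes "norm p < 1" shows "qp p n \<noteq> 0"
proof -
  have "1 - p^(2*i+2) \<noteq> 0" for i using one_minus_pow_nz[OF assms, of "2*i+2"] by simp
  then show ?thesis unfolding qp_def by (simp add: prod_zero_iff del: power_Suc)
qed

definition gb :: "complex \<Rightarrow> nat \<Rightarrow> nat \<Rightarrow> complex" where
  "gb p n k = qp p n / (qp p k * qp p (n - k))"

lemma aux_gb:
  fixes a b K M A :: complex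
  assumes "a \<noteq> 0" "b \<noteq> 0" "K \<noteq> 0" "M \<noteq> 0"
  shows "A*(1-(1-a)*(1-b))/(K*b*(M*a)) = A/(K*b*M) + (1-a)*(A/(K*(M*a)))"
  using assms by (simp add: field_simps)

lemma cq_closed:
  assumes p: "norm p < 1"
  shows "k \<le> n \<Longrightarrow> cq p n k = p^(k*(k-1)) * gb p n k"
proof (induction n arbitrary: k)
  case 0 then show ?case by (simp add: gb_def)
next
  case (Suc n)
  note nz = qp_nz[OF p]
  show ?case
  proof (cases k)
    case 0 then show ?thesis by (simp add: gb_def nz)
  next
    case (Suc k')
    show ?thesis
    proof (cases "k' = n")
      case True
      have "cq p (Suc n) (Suc n) = p^(2*n) * cq p n n" by (simp add: cq_big)
      also have "\<dots> = p^(2*n) * p^(n*(n-1))" using Suc.IH[of n] by (simp add: gb_def nz)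
      also have "\<dots> = p^(2*n + n*(n-1))" by (simp add: power_add)
      also have "2*n + n*(n-1) = Suc n * n" by (cases n) (auto simp: algebra_simps)
      finally show ?thesis using True Suc by (simp add: gb_def nz)
    next
      case False
      with Suc Suc.prems have kn: "k' < n" by simp
      then obtain m where n: "n = k' + Suc m" by (metis add_Suc_right less_iff_Suc_add add.commute)
      have IH1: "cq p n (Suc k') = p^(Suc k' * k') * gb p n (Suc k')" using Suc.IH[of "Suc k'"] kn by simp
      have IH2: "cq p n k' = p^(k' * (k'-1)) * gb p n k'" using Suc.IH[of k'] kn by simp
      have e1: "p^(2*n) * p^(k'*(k'-1)) = p^(Suc k' * k') * p^(2*Suc m)"
        unfolding n by (cases k') (simp_all add: power_add[symmetric] algebra_simps)
      have key: "gb p (Suc n) (Suc k') = gb p n (Suc k') + p^(2*Suc m) * gb p n k'"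
      proof -
        define u w where "u = p^(2*Suc m)" and "w = p^(2*Suc k')"
        have a: "Suc n - Suc k' = Suc m" "n - Suc k' = m" "n - k' = Suc m" using n by auto
        have c: "1 - u \<noteq> 0" "1 - w \<noteq> 0" unfolding u_def w_def by (rule one_minus_pow_nz[OF p], simp)+
        have d: "p^(2*Suc n) = u * w" unfolding n u_def w_def by (simp add: power_add[symmetric] add.commute)
        have qs: "qp p (Suc j) = qp p j * (1 - p^(2*Suc j))" for j by (simp add: qp_Suc)
        have g1: "gb p (Suc n) (Suc k') = qp p n * (1 - u*w) / (qp p k' * (1 - w) * (qp p m * (1 - u)))"
          unfolding gb_def a qs d u_def[symmetric] w_def[symmetric] ..
        have g2: "gb p n (Suc k') = qp p n / (qp p k' * (1 - w) * qp p m)"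
          unfolding gb_def a qs w_def[symmetric] ..
        have g3: "gb p n k' = qp p n / (qp p k' * (qp p m * (1 - u)))"
          unfolding gb_def a qs u_def[symmetric] ..
        have aux: "A*(1-u*w)/(K*(1-w)*(M*(1-u))) = A/(K*(1-w)*M) + u*(A/(K*(M*(1-u))))"
          if "K \<noteq> 0" "M \<noteq> 0" for A K M :: complex
          using aux_gb[of "1-u" "1-w" K M A] c that by simp
        show ?thesis unfolding g1 g2 g3 u_def[symmetric] by (rule aux) (auto simp: nz)
      qed
      have "cq p (Suc n) k = cq p n (Suc k') + p^(2*n) * cq p n k'" using Suc by simp
      also have "\<dots> = p^(Suc k' * k') * (gb p n (Suc k') + p^(2*Suc m) * gb p n k')"
      proof -
        have "p^(2*n) * (p^(k'*(k'-1)) * gb p n k') = p^(Suc k' * k') * (p^(2*Suc m) * gb p n k')"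
          using e1 by (metis mult.assoc)
        then show ?thesis unfolding IH1 IH2 distrib_left by simp
      qed
      also have "\<dots> = p^(k*(k-1)) * gb p (Suc n) k" using Suc key by (simp add: mult.commute)
      finally show ?thesis .
    qed
  qed
qed



lemma prod_lessThan_add: "(\<Prod>i<(a::nat)+b. g i) = (\<Prod>i<a. g i) * (\<Prod>i<b. g (a+i))"
  by (induction b) (simp_all add: mult.assoc)

lemma sum_atMost_add: "(\<Sum>k\<le>(a::nat)+b. t k) = (\<Sum>k\<le>a. t k) + (\<Sum>j<b. t (a+1+j))"
  by (induction b) (simp_all add: add.assoc)

lemma sum_atMost_rev: "(\<Sum>k\<le>(N::nat). t k) = (\<Sum>j\<le>N. t (N - j))"
proof -
  have "(\<Sum>k\<le>N. t k) = (\<Sum>k<Suc N. t k)" by (simp add: lessThan_Suc_atMost)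
  also have "\<dots> = (\<Sum>i<Suc N. t (Suc N - Suc i))" by (rule sum.nat_diff_reindex[symmetric])
  also have "\<dots> = (\<Sum>j\<le>N. t (N - j))" by (simp add: lessThan_Suc_atMost)
  finally show ?thesis .
qed

lemma prod_z_p: "(\<Prod>i<N. z * p^(2*i+1)) = z^N * (p::complex)^(N*N)"
proof (induction N)
  case 0 then show ?case by simp
next
  case (Suc N)
  have ex: "Suc N * Suc N = N*N + (2*N+1)" by (simp add: algebra_simps mult_2 mult_2_right)
  have "(\<Prod>i<Suc N. z * p^(2*i+1)) = (z^N * p^(N*N)) * (z * p^(2*N+1))"
    by (simp only: prod.lessThan_Suc Suc.IH)
  also have "\<dots> = z^(Suc N) * p^(N*N + (2*N+1))" by (simp only: power_add power_Suc mult_ac)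
  finally show ?case by (simp only: ex)
qed

lemma pw1:
  fixes p z :: complex
  assumes "p \<noteq> 0" "z \<noteq> 0"
  shows "z^(k+j) * p^((k+j)*(k+j)) * (p^(k*(k-1)) * (p/(z*p^(2*(k+j))))^k) = p^(j*j) * z^j"
proof -
  have e1: "p^(k*(k-1)) * p^k = p^(k*k)" by (cases k) (simp_all add: power_add[symmetric] algebra_simps)
  have ex: "(k+j)*(k+j) + k*k = j*j + 2*(k+j)*k" by (simp add: algebra_simps mult_2 mult_2_right)
  have e2: "p^((k+j)*(k+j)) * p^(k*k) = p^(j*j) * (p^(2*(k+j)))^k"
    by (simp only: power_add[symmetric] power_mult[symmetric] ex)
  have "z^(k+j) * p^((k+j)*(k+j)) * (p^(k*(k-1)) * (p/(z*p^(2*(k+j))))^k)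
        = z^j * z^k * (p^((k+j)*(k+j)) * (p^(k*(k-1)) * p^k)) / (z^k * (p^(2*(k+j)))^k)"
    by (simp add: power_divide power_mult_distrib power_add)
  also have "\<dots> = z^j * z^k * (p^(j*j) * (p^(2*(k+j)))^k) / (z^k * (p^(2*(k+j)))^k)"
    by (simp only: e1 e2)
  also have "\<dots> = p^(j*j) * z^j" using assms by (simp add: field_simps)
  finally show ?thesis .
qed

lemma pw2:
  fixes p z :: complex
  assumes "p \<noteq> 0" "z \<noteq> 0" and that: "k = N + (j+1)"
  shows "z^N * p^(N*N) * (p^(k*(k-1)) * (p/(z*p^(2*N)))^k) = p^((j+1)*(j+1)) / z^(j+1)"
proof -
  have e1: "p^(k*(k-1)) * p^k = p^(k*k)" by (cases k) (simp_all add: power_add[symmetric] algebra_simps)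
  have ex: "N*N + k*k = (j+1)*(j+1) + 2*N*k" unfolding that by (simp add: algebra_simps mult_2 mult_2_right)
  have e2: "p^(N*N) * p^(k*k) = p^((j+1)*(j+1)) * (p^(2*N))^k"
    by (simp only: power_add[symmetric] power_mult[symmetric] ex)
  have e3: "z^k = z^N * z^(j+1)" unfolding that by (simp add: power_add)
  have "z^N * p^(N*N) * (p^(k*(k-1)) * (p/(z*p^(2*N)))^k)
        = z^N * (p^(N*N) * (p^(k*(k-1)) * p^k)) / (z^k * (p^(2*N))^k)"
    by (simp add: power_divide power_mult_distrib)
  also have "\<dots> = z^N * (p^((j+1)*(j+1)) * (p^(2*N))^k) / (z^N * z^(j+1) * (p^(2*N))^k)"
    by (simp only: e1 e2 e3)
  also have "\<dots> = p^((j+1)*(j+1)) / z^(j+1)" using assms by (simp add: field_simps)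
  finally show ?thesis .
qed

lemma finite_jtp:
  fixes p z :: complex
  assumes p: "norm p < 1" "p \<noteq> 0" and z: "z \<noteq> 0"
  shows "(\<Prod>i<N. (1 + z*p^(2*i+1)) * (1 + p^(2*i+1)/z)) =
         (\<Sum>j\<le>N. gb p (2*N) (N-j) * (p^(j*j) * z^j)) +
         (\<Sum>j<N. gb p (2*N) (N+1+j) * (p^((j+1)*(j+1)) / z^(j+1)))"
proof -
  define y where "y = p/(z*p^(2*N))"
  define g where "g i = 1 + y * p^(2*i)" for i
  have q: "(\<Prod>i<N+N. g i) = (\<Sum>k\<le>N+N. cq p (N+N) k * y^k)"
    unfolding g_def by (rule qbin)
  have hi: "g (N+i) = 1 + p^(2*i+1)/z" for i
    unfolding g_def y_def using p z by (simp add: field_simps power_add algebra_simps)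
  have lo: "g (N - Suc i) = (1 + z*p^(2*i+1)) / (z*p^(2*i+1))" if "i < N" for i
  proof -
    obtain d where d: "N = i + 1 + d" using \<open>i<N\<close> by (metis add_Suc_right less_iff_Suc_add add.commute Suc_eq_plus1)
    have "N - Suc i = d" using d by simp
    moreover have "y * p^(2*d) = 1/(z*p^(2*i+1))"
      unfolding y_def d using p z by (simp add: field_simps power_add)
    ultimately show ?thesis unfolding g_def using p z by (simp add: field_simps)
  qed
  have "(\<Prod>i<N. g i) = (\<Prod>i<N. g (N - Suc i))" by (rule prod.nat_diff_reindex[symmetric])
  also have "\<dots> = (\<Prod>i<N. (1 + z*p^(2*i+1)) / (z*p^(2*i+1)))" by (rule prod.cong) (auto simp: lo)
  also have "\<dots> = (\<Prod>i<N. 1 + z*p^(2*i+1)) / (z^N * p^(N*N))"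
    by (simp only: prod_dividef prod_z_p)
  finally have L1: "(\<Prod>i<N. g i) = (\<Prod>i<N. 1 + z*p^(2*i+1)) / (z^N * p^(N*N))" .
  have "(\<Prod>i<N+N. g i) = (\<Prod>i<N. g i) * (\<Prod>i<N. g (N+i))" by (rule prod_lessThan_add)
  also have "\<dots> = (\<Prod>i<N. (1 + z*p^(2*i+1)) * (1 + p^(2*i+1)/z)) / (z^N * p^(N*N))"
    unfolding L1 hi by (simp add: prod.distrib)
  finally have L2: "(\<Prod>i<N. (1 + z*p^(2*i+1)) * (1 + p^(2*i+1)/z)) = z^N * p^(N*N) * (\<Prod>i<N+N. g i)"
    using p z by (simp add: field_simps)
  define t where "t k = z^N * p^(N*N) * (cq p (N+N) k * y^k)" for k
  have "(\<Prod>i<N. (1 + z*p^(2*i+1)) * (1 + p^(2*i+1)/z)) = (\<Sum>k\<le>N+N. t k)"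
    unfolding L2 q t_def by (simp add: sum_distrib_left)
  also have "\<dots> = (\<Sum>k\<le>N. t k) + (\<Sum>j<N. t (N+1+j))" by (rule sum_atMost_add)
  also have "(\<Sum>k\<le>N. t k) = (\<Sum>j\<le>N. t (N - j))" by (rule sum_atMost_rev)
  also have "\<dots> = (\<Sum>j\<le>N. gb p (2*N) (N-j) * (p^(j*j) * z^j))"
  proof (rule sum.cong[OF refl])
    fix j assume "j \<in> {..N}"
    then obtain k where k: "N = k + j" "N - j = k" by (metis add_diff_cancel_right' atMost_iff le_add_diff_inverse2)
    have c: "cq p (N+N) k = p^(k*(k-1)) * gb p (2*N) k"
    proof -
      have "k \<le> N+N" using k(1) by simp
      from cq_closed[OF p(1) this] show ?thesis by (simp add: mult_2)
    qed
    have "t (N-j) = gb p (2*N) k * (z^N * p^(N*N) * (p^(k*(k-1)) * (p/(z*p^(2*N)))^k))"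
      unfolding t_def y_def k(2) c by (simp only: mult_ac)
    also have "z^N * p^(N*N) * (p^(k*(k-1)) * (p/(z*p^(2*N)))^k) = p^(j*j) * z^j"
      unfolding k(1) by (rule pw1[OF p(2) z])
    finally have "t (N-j) = gb p (2*N) k * (p^(j*j) * z^j)" .
    then show "t (N-j) = gb p (2*N) (N-j) * (p^(j*j) * z^j)" using k(2) by simp
  qed
  also have "(\<Sum>j<N. t (N+1+j)) = (\<Sum>j<N. gb p (2*N) (N+1+j) * (p^((j+1)*(j+1)) / z^(j+1)))"
  proof (rule sum.cong[OF refl])
    fix j assume "j \<in> {..<N}"
    then have le: "N+1+j \<le> N+N" by simp
    have "t (N+1+j) = z^N * p^(N*N) * (p^((N+1+j)*(N+1+j-1)) * gb p (2*N) (N+1+j) * y^(N+1+j))"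
      unfolding t_def using cq_closed[OF p(1) le] by (simp add: mult_2)
    also have "\<dots> = gb p (2*N) (N+1+j) * (z^N * p^(N*N) * (p^((N+1+j)*(N+1+j-1)) * (p/(z*p^(2*N)))^(N+1+j)))"
      unfolding y_def by (simp add: algebra_simps)
    also have "\<dots> = gb p (2*N) (N+1+j) * (p^((j+1)*(j+1)) / z^(j+1))"
      using pw2[OF p(2) z, of "N+1+j" N j] by simp
    finally show "t (N+1+j) = gb p (2*N) (N+1+j) * (p^((j+1)*(j+1)) / z^(j+1))" .
  qed
  finally show ?thesis .
qed



lemma summable_theta_real:
  fixes r c :: real
  assumes r: "0 \<le> r" "r < 1" and c: "0 \<le> c"
  shows "summable (\<lambda>j. r^(j*j) * c^j)"
proof (rule summable_comparison_test_ev)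
  have "(\<lambda>j. r^j * c) \<longlonglongrightarrow> 0 * c" by (intro tendsto_mult LIMSEQ_power_zero) (use r in auto)
  then have "eventually (\<lambda>j. r^j * c < 1/2) sequentially"
    by (intro order_tendstoD) auto
  then show "eventually (\<lambda>j. norm (r^(j*j) * c^j) \<le> (1/2)^j) sequentially"
  proof eventually_elim
    case (elim j)
    have "norm (r^(j*j) * c^j) = (r^j * c)^j" using r c by (simp add: power_mult power_mult_distrib)
    also have "\<dots> \<le> (1/2)^j" by (rule power_mono) (use elim r c in auto)
    finally show ?case .
  qed
qed (simp add: summable_geometric)

lemma summable_theta_real':
  fixes r c :: real
  assumes r: "0 \<le> r" "r < 1" and c: "0 \<le> c"
  shows "summable (\<lambda>j. r^((j+1)*(j+1)) * c^(j+1))"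
  using summable_ignore_initial_segment[OF summable_theta_real[OF r c], of 1] by simp

lemma real_prod_lower:
  fixes r :: real
  assumes r: "0 \<le> r" "r < 1"
  shows "\<exists>Lo>0. \<forall>k. (\<Prod>i<k. 1 - r^(2*i+2)) \<ge> Lo"
proof -
  define f where "f i = 1 - r^(2*i+2)" for i
  have sm: "summable (\<lambda>i. norm (f i - 1))"
  proof -
    have "summable (\<lambda>i. r^2 * (r^2)^i)" by (intro summable_mult summable_geometric) (use r in \<open>auto simp: power_less_one_iff abs_if\<close>)
    moreover have "norm (f i - 1) = r^2 * (r^2)^i" for i unfolding f_def using r by (simp add: power_mult[symmetric] power_add[symmetric] algebra_simps)
    ultimately show ?thesis by simp
  qed
  have cp: "convergent_prod f" by (rule abs_convergent_prod_imp_convergent_prod[OF summable_imp_abs_convergent_prod[OF sm]])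
  have pos: "f i > 0" for i
  proof -
    have "r^(2*i+2) < 1" using power_less_one_iff[OF r(1), of "2*i+2"] r(2) by simp
    then show ?thesis unfolding f_def by simp
  qed
  have "0 < prodinf f" by (rule less_0_prodinf[OF cp pos])
  moreover have "prod f {..<k} \<ge> prodinf f" for k
    by (rule prod_ge_prodinf) (use cp convergent_prod_has_prod pos less_imp_le r in \<open>auto simp: f_def\<close>)
  ultimately show ?thesis unfolding f_def by blast
qed

lemma gb_bound:
  fixes p :: complex
  assumes p: "norm p < 1"
  shows "\<exists>B. \<forall>n k. norm (gb p n k) \<le> B"
proof -
  define r where "r = norm p"
  have r: "0 \<le> r" "r < 1" using p r_def by auto
  obtain Lo where Lo: "Lo > 0" "\<And>k. (\<Prod>i<k. 1 - r^(2*i+2)) \<ge> Lo" using real_prod_lower[OF r] by blast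
  define U where "U = exp (\<Sum>i. r^(2*i+2))"
  have sm: "summable (\<lambda>i. r^(2*i+2))"
  proof -
    have "summable (\<lambda>i. r^2 * (r^2)^i)" by (intro summable_mult summable_geometric) (use r in \<open>auto simp: power_less_one_iff abs_if\<close>)
    moreover have "r^(2*i+2) = r^2 * (r^2)^i" for i by (simp add: power_mult[symmetric] power_add[symmetric] algebra_simps)
    ultimately show ?thesis by simp
  qed
  have up: "norm (qp p n) \<le> U" for n
  proof -
    have "norm (qp p n) \<le> (\<Prod>i<n. norm (1 - p^(2*i+2)))" unfolding qp_def by (rule norm_prod_le)
    also have "\<dots> \<le> (\<Prod>i<n. 1 + r^(2*i+2))"
    proof (rule prod_mono)
      fix i assume "i \<in> {..<n}"
      have "norm (1 - p^(2*i+2)) \<le> norm (1::complex) + norm (p^(2*i+2))" by (rule norm_triangle_ineq4)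
      then show "0 \<le> norm (1 - p^(2*i+2)) \<and> norm (1 - p^(2*i+2)) \<le> 1 + r^(2*i+2)"
        by (simp only: r_def norm_power norm_one) simp
    qed
    also have "\<dots> \<le> exp (\<Sum>i<n. r^(2*i+2))" by (rule prod_le_exp_sum) (use r in auto)
    also have "\<dots> \<le> U" unfolding U_def
      by (subst exp_le_cancel_iff) (rule sum_le_suminf[OF sm], use r in auto)
    finally show ?thesis .
  qed
  have lo: "norm (qp p k) \<ge> Lo" for k
  proof -
    have "Lo \<le> (\<Prod>i<k. 1 - r^(2*i+2))" by (rule Lo(2))
    also have "\<dots> \<le> (\<Prod>i<k. norm (1 - p^(2*i+2)))"
    proof (rule prod_mono)
      fix i assume "i \<in> {..<k}"
      have "r^(2*i+2) \<le> 1" using r by (intro power_le_one) auto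
      moreover have "1 - r^(2*i+2) \<le> norm (1 - p^(2*i+2))"
        using norm_triangle_ineq2[of 1 "p^(2*i+2)"] by (simp only: r_def norm_power norm_one)
      ultimately show "0 \<le> 1 - r^(2*i+2) \<and> 1 - r^(2*i+2) \<le> norm (1 - p^(2*i+2))" by simp
    qed
    also have "\<dots> = norm (qp p k)" unfolding qp_def by (rule prod_norm)
    finally show ?thesis .
  qed
  have "norm (gb p n k) \<le> U / (Lo * Lo)" for n k
  proof -
    have "norm (gb p n k) = norm (qp p n) / (norm (qp p k) * norm (qp p (n-k)))"
      unfolding gb_def by (simp add: norm_divide norm_mult)
    also have "\<dots> \<le> U / (Lo * Lo)"
      by (intro frac_le mult_mono up lo mult_pos_pos Lo(1)) (use Lo(1) lo in \<open>auto simp: U_def intro: order.trans[OF less_imp_le[OF Lo(1)]]\<close>)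
    finally show ?thesis .
  qed
  then show ?thesis by blast
qed



definition Qi :: "complex \<Rightarrow> complex" where "Qi p = (\<Prod>n. 1 - p^(2*n+2))"

lemma Qi_pp: "norm p < 1 \<Longrightarrow> pp (\<lambda>n. 1 - p^(2*n+2)) (Qi p)"
  unfolding Qi_def by (rule pp_prodinf(1)) (use summable_geom_term[of p 2 "-1" 2] in simp)

lemma Qi_nz: "norm p < 1 \<Longrightarrow> Qi p \<noteq> 0"
  unfolding Qi_def
proof (rule pp_prodinf(2))
  assume p: "norm p < 1"
  show "summable (\<lambda>n. norm (1 - p^(2*n+2) - 1))" using summable_geom_term[OF p, of 2 "-1" 2] by simp
  fix n show "1 - p^(2*n+2) \<noteq> 0" by (rule one_minus_pow_nz[OF p]) simp
qed

lemma qp_lim: "norm p < 1 \<Longrightarrow> (\<lambda>n. qp p n) \<longlonglongrightarrow> Qi p"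
  using Qi_pp[of p] unfolding pp_def qp_def by simp

lemma qp_lim_comp: "norm p < 1 \<Longrightarrow> filterlim f sequentially sequentially \<Longrightarrow> (\<lambda>n. qp p (f n)) \<longlonglongrightarrow> Qi p"
  by (rule filterlim_compose[OF qp_lim])

lemma filterlim_double: "filterlim (\<lambda>n::nat. 2*n) sequentially sequentially"
  by (intro filterlim_subseq) (auto simp: strict_mono_def)

lemma gb_lim1:
  assumes p: "norm p < 1"
  shows "(\<lambda>N. gb p (2*N) (N - j)) \<longlonglongrightarrow> 1 / Qi p"
proof -
  have L: "(\<lambda>N. qp p (2*N) / (qp p (N-j) * qp p (N+j))) \<longlonglongrightarrow> Qi p / (Qi p * Qi p)"
    using tendsto_divide[OF qp_lim_comp[OF p filterlim_double] tendsto_mult[OF qp_lim_comp[OF p filterlim_minus_const_nat_at_top]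
       qp_lim_comp[OF p filterlim_add_const_nat_at_top]]] Qi_nz[OF p] by simp
  have E: "Qi p / (Qi p * Qi p) = 1 / Qi p" using Qi_nz[OF p] by simp
  have V: "eventually (\<lambda>N. qp p (2*N) / (qp p (N-j) * qp p (N+j)) = gb p (2*N) (N - j)) sequentially"
    using eventually_ge_at_top[of j] by eventually_elim (simp add: gb_def)
  show ?thesis using Lim_transform_eventually[OF L V] unfolding E .
qed

lemma gb_lim2:
  assumes p: "norm p < 1"
  shows "(\<lambda>N. gb p (2*N) (N + 1 + j)) \<longlonglongrightarrow> 1 / Qi p"
proof -
  have L: "(\<lambda>N. qp p (2*N) / (qp p (N+(1+j)) * qp p (N-(1+j)))) \<longlonglongrightarrow> Qi p / (Qi p * Qi p)"
    using tendsto_divide[OF qp_lim_comp[OF p filterlim_double] tendsto_mult[OF qp_lim_comp[OF p filterlim_add_const_nat_at_top[of "1+j"]]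
       qp_lim_comp[OF p filterlim_minus_const_nat_at_top[of "1+j"]]]] Qi_nz[OF p] by simp
  have E: "Qi p / (Qi p * Qi p) = 1 / Qi p" using Qi_nz[OF p] by simp
  have V: "eventually (\<lambda>N. qp p (2*N) / (qp p (N+(1+j)) * qp p (N-(1+j))) = gb p (2*N) (N + 1 + j)) sequentially"
    using eventually_ge_at_top[of "j+1"] by eventually_elim (simp add: gb_def add.assoc)
  show ?thesis using Lim_transform_eventually[OF L V] unfolding E .
qed

lemma tannery_apply:
  fixes c :: "nat \<Rightarrow> complex" and g :: "nat \<Rightarrow> nat \<Rightarrow> complex"
  assumes lim: "\<And>j. (\<lambda>N. g N j) \<longlonglongrightarrow> L"
    and bd: "\<And>N j. norm (g N j) \<le> B"
    and sm: "summable (\<lambda>j. norm (c j))"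
    and g': "\<And>N j. g' N j = (if j < Kb N then g N j * c j else 0)"
    and Kb: "filterlim Kb sequentially sequentially"
  shows "(\<lambda>N. suminf (\<lambda>j. g' N j)) \<longlonglongrightarrow> suminf (\<lambda>j. L * c j)"
proof -
  have B: "B \<ge> 0" using bd[of 0 0] norm_ge_zero order.trans by blast
  have "eventually (\<lambda>n. summable (\<lambda>k. norm (g' n k))) sequentially \<and>
        summable (\<lambda>n. norm (L * c n)) \<and>
        ((\<lambda>n. suminf (\<lambda>k. g' n k)) \<longlonglongrightarrow> suminf (\<lambda>k. L * c k))"
  proof (rule tannerys_theorem[where M = "\<lambda>j. B * norm (c j)"])
    fix j
    have "eventually (\<lambda>N. j < Kb N) sequentially"
    proof -
      have "eventually (\<lambda>N. Suc j \<le> Kb N) sequentially" using Kb filterlim_at_top by blast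
      then show ?thesis by eventually_elim simp
    qed
    then have V: "eventually (\<lambda>N. g N j * c j = g' N j) sequentially"
      by eventually_elim (simp add: g')
    have T: "(\<lambda>N. g N j * c j) \<longlonglongrightarrow> L * c j" by (intro tendsto_mult lim tendsto_const)
    show "(\<lambda>N. g' N j) \<longlonglongrightarrow> L * c j" by (rule Lim_transform_eventually[OF T V])
  next
    show "eventually (\<lambda>(k, n). norm (g' n k) \<le> B * norm (c k)) (at_top \<times>\<^sub>F sequentially)"
    proof (intro always_eventually allI)
      fix x :: "nat \<times> nat"
      obtain k n where x: "x = (k, n)" by (cases x)
      have "norm (g' n k) \<le> B * norm (c k)"
      proof (cases "k < Kb n")
        case True
        then have "norm (g' n k) = norm (g n k) * norm (c k)" by (simp add: g' norm_mult)
        also have "\<dots> \<le> B * norm (c k)" by (intro mult_right_mono bd) auto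
        finally show ?thesis .
      qed (use B in \<open>simp add: g'\<close>)
      then show "(\<lambda>(k, n). norm (g' n k) \<le> B * norm (c k)) x" by (simp add: x)
    qed
  next
    show "summable (\<lambda>j. B * norm (c j))" by (intro summable_mult sm)
  qed simp
  then show ?thesis by (rule conjunct2[OF conjunct2])
qed



lemma has_sum_int_split:
  fixes f :: "int \<Rightarrow> complex"
  assumes s1: "summable (\<lambda>j. norm (f (int j)))" and s2: "summable (\<lambda>j. norm (f (- int j - 1)))"
  shows "(f has_sum (suminf (\<lambda>j. f (int j)) + suminf (\<lambda>j. f (- int j - 1)))) UNIV"
proof -
  have h1: "((\<lambda>j. f (int j)) has_sum suminf (\<lambda>j. f (int j))) UNIV"
    by (rule norm_summable_imp_has_sum[OF s1 summable_sums[OF summable_norm_cancel[OF s1]]])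
  have h2: "((\<lambda>j. f (- int j - 1)) has_sum suminf (\<lambda>j. f (- int j - 1))) UNIV"
    by (rule norm_summable_imp_has_sum[OF s2 summable_sums[OF summable_norm_cancel[OF s2]]])
  have i1: "inj_on (int) UNIV" by (simp add: inj_on_def)
  have i2: "inj_on (\<lambda>j. - int j - 1) UNIV" by (simp add: inj_on_def)
  have r1: "int ` UNIV = {n. n \<ge> 0}"
    by (auto simp: image_iff) (metis nonneg_int_cases)
  have r2: "(\<lambda>j. - int j - 1) ` UNIV = {n. n < 0}"
  proof (auto simp: image_iff)
    fix n :: int assume "n < 0"
    then show "\<exists>j. n = - int j - 1" by (intro exI[of _ "nat (- n - 1)"]) simp
  qed
  have H1: "(f has_sum suminf (\<lambda>j. f (int j))) {n. n \<ge> 0}"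
    using has_sum_reindex[OF i1, of f] h1 r1 by (simp add: o_def)
  have H2: "(f has_sum suminf (\<lambda>j. f (- int j - 1))) {n. n < 0}"
    using has_sum_reindex[OF i2, of f] h2 r2 by (simp add: o_def)
  have "(f has_sum (suminf (\<lambda>j. f (int j)) + suminf (\<lambda>j. f (- int j - 1)))) ({n. n \<ge> 0} \<union> {n. n < 0})"
    by (rule has_sum_Un_disjoint[OF H1 H2]) auto
  moreover have "{n::int. n \<ge> 0} \<union> {n. n < 0} = UNIV" by auto
  ultimately show ?thesis by simp
qed

lemma jtp:
  fixes p z :: complex
  assumes p: "norm p < 1" "p \<noteq> 0" and z: "z \<noteq> 0"
  shows "\<exists>S. ((\<lambda>n::int. p powi (n*n) * z powi n) has_sum S) UNIV \<and>
             pp (\<lambda>n. (1 - p^(2*n+2)) * ((1 + z*p^(2*n+1)) * (1 + p^(2*n+1)/z))) S"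
proof -
  obtain B where B: "\<And>n k. norm (gb p n k) \<le> B" using gb_bound[OF p(1)] by blast
  define r where "r = norm p"
  have r: "0 \<le> r" "r < 1" using p r_def by auto
  define c where "c j = p^(j*j) * z^j" for j
  define c' where "c' j = p^((j+1)*(j+1)) / z^(j+1)" for j
  have smc: "summable (\<lambda>j. norm (c j))"
  proof -
    have "norm (c j) = r^(j*j) * norm z ^ j" for j by (simp add: c_def r_def norm_mult norm_power)
    then show ?thesis using summable_theta_real[OF r, of "norm z"] by simp
  qed
  have smc': "summable (\<lambda>j. norm (c' j))"
  proof -
    have "norm (c' j) = r^((j+1)*(j+1)) * (1/norm z) ^ (j+1)" for j
      by (simp add: c'_def r_def norm_divide norm_power power_divide norm_mult)
    then show ?thesis using summable_theta_real'[OF r, of "1/norm z"] by simp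
  qed
  define g1 where "g1 N j = (if j < Suc N then gb p (2*N) (N-j) * c j else 0)" for N j
  define g2 where "g2 N j = (if j < id N then gb p (2*N) (N+1+j) * c' j else 0)" for N j
  have T1: "(\<lambda>N. suminf (\<lambda>j. g1 N j)) \<longlonglongrightarrow> suminf (\<lambda>j. (1 / Qi p) * c j)"
    by (rule tannery_apply[where g = "\<lambda>N j. gb p (2*N) (N-j)" and B = B and Kb = Suc])
       (auto simp: gb_lim1[OF p(1)] B smc g1_def filterlim_Suc)
  have T2: "(\<lambda>N. suminf (\<lambda>j. g2 N j)) \<longlonglongrightarrow> suminf (\<lambda>j. (1 / Qi p) * c' j)"
    by (rule tannery_apply[where g = "\<lambda>N j. gb p (2*N) (N+1+j)" and B = B and Kb = id])
       (use gb_lim2[OF p(1)] B smc' filterlim_ident in \<open>auto simp: g2_def id_def\<close>)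
  have e1: "suminf (\<lambda>j. g1 N j) = (\<Sum>j\<le>N. gb p (2*N) (N-j) * (p^(j*j) * z^j))" for N
    by (subst suminf_finite[of "{..N}"]) (auto simp: g1_def c_def)
  have e2: "suminf (\<lambda>j. g2 N j) = (\<Sum>j<N. gb p (2*N) (N+1+j) * (p^((j+1)*(j+1)) / z^(j+1)))" for N
    by (subst suminf_finite[of "{..<N}"]) (auto simp: g2_def c'_def)
  have PP: "pp (\<lambda>n. (1 + z*p^(2*n+1)) * (1 + p^(2*n+1)/z))
           (suminf (\<lambda>j. (1 / Qi p) * c j) + suminf (\<lambda>j. (1 / Qi p) * c' j))"
    unfolding pp_def finite_jtp[OF p z] using tendsto_add[OF T1 T2] unfolding e1 e2 .
  then have P: "pp (\<lambda>n. (1 - p^(2*n+2)) * ((1 + z*p^(2*n+1)) * (1 + p^(2*n+1)/z))) (suminf c + suminf c')"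
  proof -
    have s1: "Qi p * suminf (\<lambda>j. (1/Qi p) * c j) = suminf c"
      using suminf_mult[OF summable_norm_cancel[OF smc], of "1/Qi p"] Qi_nz[OF p(1)] by simp
    have s2: "Qi p * suminf (\<lambda>j. (1/Qi p) * c' j) = suminf c'"
      using suminf_mult[OF summable_norm_cancel[OF smc'], of "1/Qi p"] Qi_nz[OF p(1)] by simp
    show ?thesis using pp_mult[OF Qi_pp[OF p(1)] PP] unfolding distrib_left s1 s2 .
  qed
  define f where "f n = p powi (n*n) * z powi n" for n :: int
  have fc: "f (int j) = c j" for j
  proof -
    have "int j * int j = int (j*j)" by simp
    then show ?thesis unfolding f_def c_def by (simp only: power_int_of_nat)
  qed
  have fc': "f (- int j - 1) = c' j" for j
  proof -
    have a: "(- int j - 1) * (- int j - 1) = int ((j+1)*(j+1))" by (simp add: algebra_simps)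
    have b: "- int j - 1 = - int (j+1)" by simp
    show ?thesis unfolding f_def c'_def a unfolding b power_int_minus power_int_of_nat by (simp only: divide_inverse)
  qed
  have "(f has_sum (suminf c + suminf c')) UNIV"
    using has_sum_int_split[of f] smc smc' unfolding fc fc' by simp
  then show ?thesis using P unfolding f_def by blast
qed



definition sg :: "int \<Rightarrow> complex" where "sg k = (if even k then 1 else -1)"

lemma neg1_powi: "(-1::complex) powi k = sg k"
proof (cases "k \<ge> 0")
  case True
  then obtain n where k: "k = int n" using nonneg_int_cases by blast
  show ?thesis unfolding k sg_def power_int_of_nat by (simp add: even_of_nat)
next
  case False
  define n where "n = nat (-k)"
  have k: "k = - int n" using False n_def by simp
  show ?thesis unfolding k sg_def power_int_minus power_int_of_nat by (simp add: even_of_nat)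
qed

definition tf :: "complex \<Rightarrow> nat \<Rightarrow> nat \<Rightarrow> complex \<Rightarrow> int \<Rightarrow> complex" where
  "tf q a b c n = c powi n * q powi (int a * n * n + int b * n)"

lemma tf_inst:
  fixes q c :: complex
  assumes q: "norm q < 1" "q \<noteq> 0" and c: "c = 1 \<or> c = -1" and a: "a > 0"
  shows "\<exists>S. (tf q a b c has_sum S) UNIV \<and>
     pp (\<lambda>n. (1 - (q^a)^(2*n+2)) * ((1 + (c*q^b)*(q^a)^(2*n+1)) * (1 + (q^a)^(2*n+1)/(c*q^b)))) S"
proof -
  have p: "norm (q^a) < 1" "q^a \<noteq> 0" using q a by (auto simp: norm_power power_less_one_iff)
  have z: "c * q^b \<noteq> 0" using q c by auto
  obtain S where S: "((\<lambda>n::int. (q^a) powi (n*n) * (c*q^b) powi n) has_sum S) UNIV"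
     "pp (\<lambda>n. (1 - (q^a)^(2*n+2)) * ((1 + (c*q^b)*(q^a)^(2*n+1)) * (1 + (q^a)^(2*n+1)/(c*q^b)))) S"
    using jtp[OF p z] by blast
  have "(q^a) powi (n*n) * (c*q^b) powi n = tf q a b c n" for n
    unfolding tf_def power_int_mult_distrib power_int_power power_int_add[OF disjI1[OF q(2)]]
    by (simp only: mult_ac)
  then have "(\<lambda>n::int. (q^a) powi (n*n) * (c*q^b) powi n) = tf q a b c" by (intro ext)
  then show ?thesis using S by (intro exI[of _ S]) simp
qed

lemma tf_1: "tf q a b 1 n = q powi (int a * n * n + int b * n)"
  unfolding tf_def by simp

lemma tf_m1: "tf q a b (-1) n = sg n * q powi (int a * n * n + int b * n)"
  unfolding tf_def neg1_powi ..

lemma sg_add: "sg (a + b) = sg a * sg b"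
  unfolding sg_def by simp

lemma sg_diff: "sg (a - b) = sg a * sg b"
  unfolding sg_def by simp

lemma sg_uminus: "sg (- a) = sg a"
  unfolding sg_def by simp

lemma sg_sq: "sg a * sg a = 1"
  unfolding sg_def by simp

lemma parity_split:
  fixes f :: "int \<Rightarrow> complex"
  assumes "(f has_sum S) UNIV" "((\<lambda>m. f (2*m)) has_sum A) UNIV" "((\<lambda>m. f (2*m+1)) has_sum B) UNIV"
  shows "S = A + B"
proof -
  have E1: "((\<lambda>m. f (2*m)) has_sum A) UNIV = (f has_sum A) {n. even n}"
    by (rule has_sum_reindex_bij_witness[where j = "\<lambda>m. 2*m" and i = "\<lambda>n. n div 2"]) simp_all
  have O1: "((\<lambda>m. f (2*m+1)) has_sum B) UNIV = (f has_sum B) {n. odd n}"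
    by (rule has_sum_reindex_bij_witness[where j = "\<lambda>m. 2*m+1" and i = "\<lambda>n. n div 2"]) (simp_all add: odd_two_times_div_two_succ)
  have E: "(f has_sum A) {n. even n}" using E1 assms(2) by simp
  have O: "(f has_sum B) {n. odd n}" using O1 assms(3) by simp
  have "(f has_sum (A + B)) ({n. even n} \<union> {n. odd n})" by (rule has_sum_Un_disjoint[OF E O]) auto
  moreover have "{n::int. even n} \<union> {n. odd n} = UNIV" by auto
  ultimately have "(f has_sum (A + B)) UNIV" by simp
  then show ?thesis using assms(1) has_sum_unique by blast
qed



lemma has_sum_product:
  fixes f g :: "int \<Rightarrow> complex"
  assumes hf: "(f has_sum A) UNIV" and hg: "(g has_sum B) UNIV"
  shows "((\<lambda>(m,n). f m * g n) has_sum (A*B)) UNIV"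
proof -
  have sf: "(\<lambda>x. norm (f x)) summable_on UNIV" using hf summable_on_iff_abs_summable_on_complex has_sum_imp_summable by blast
  have sg': "(\<lambda>x. norm (g x)) summable_on UNIV" using hg summable_on_iff_abs_summable_on_complex has_sum_imp_summable by blast
  define F where "F = (\<lambda>(m,n). f m * g n)"
  have "(\<lambda>x. norm (F x)) summable_on Sigma UNIV (\<lambda>_. UNIV)"
  proof (subst Infinite_Sum.abs_summable_on_Sigma_iff, intro conjI ballI)
    fix m :: int
    show "(\<lambda>n. norm (F (m, n))) summable_on UNIV"
      unfolding F_def using summable_on_cmult_right[OF sg', of "norm (f m)"] by (simp add: norm_mult)
  next
    have "(\<lambda>m. infsum (\<lambda>n. norm (F (m, n))) UNIV) = (\<lambda>m. norm (f m) * infsum (\<lambda>n. norm (g n)) UNIV)"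
      unfolding F_def by (intro ext) (simp add: norm_mult infsum_cmult_right sg')
    moreover have "infsum (\<lambda>n. norm (F (m, n))) UNIV \<ge> 0" for m by (intro infsum_nonneg) auto
    ultimately show "(\<lambda>m. norm (infsum (\<lambda>n. norm (F (m, n))) UNIV)) summable_on UNIV"
      using summable_on_cmult_left[OF sf, of "infsum (\<lambda>n. norm (g n)) UNIV"] by simp
  qed
  then have sF0: "F summable_on Sigma UNIV (\<lambda>_. UNIV)"
    using summable_on_iff_abs_summable_on_complex[of F "Sigma UNIV (\<lambda>_. UNIV)"] by blast
  then have sF: "F summable_on UNIV" by simp
  have "infsum (\<lambda>m. infsum (\<lambda>n. F (m, n)) UNIV) UNIV = infsum F (Sigma UNIV (\<lambda>_. UNIV))"
    by (rule infsum_Sigma_banach[OF sF0])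
  moreover have "infsum (\<lambda>m. infsum (\<lambda>n. F (m, n)) UNIV) UNIV = A * B"
  proof -
    have "infsum (\<lambda>n. F (m, n)) UNIV = f m * B" for m
      unfolding F_def using infsum_cmult_right[of "f m" g UNIV] hg has_sum_imp_summable infsumI by fastforce
    then have "infsum (\<lambda>m. infsum (\<lambda>n. F (m, n)) UNIV) UNIV = infsum (\<lambda>m. f m * B) UNIV" by simp
    also have "\<dots> = A * B" using infsum_cmult_left[of B f UNIV] hf has_sum_imp_summable infsumI by fastforce
    finally show ?thesis .
  qed
  ultimately have "infsum F UNIV = A * B" by (simp add: UNIV_Times_UNIV[symmetric] del: UNIV_Times_UNIV)
  then show ?thesis using sF unfolding F_def by (metis has_sum_infsum)
qed

lemma tf_mult:
  assumes q: "q \<noteq> 0"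
  shows "tf q a b c m * tf q a' b' c' n = (c powi m * c' powi n) * q powi (int a*m*m + int b*m + (int a'*n*n + int b'*n))"
  unfolding tf_def power_int_add[OF disjI1[OF q]] by (simp only: mult_ac)

lemma double_identity:
  fixes q :: complex
  assumes q: "q \<noteq> 0"
    and h5: "(tf q 2 1 1 has_sum S5) UNIV" and h6: "(tf q 2 0 (-1) has_sum S6) UNIV"
    and hX: "(tf q 4 1 (-1) has_sum X) UNIV" and hY: "(tf q 4 3 (-1) has_sum Y) UNIV"
  shows "S5 * S6 = X^2 + q * Y^2"
proof -
  define F where "F = (\<lambda>(m,n). tf q 2 1 1 m * tf q 2 0 (-1) n)"
  have HP: "(F has_sum (S5*S6)) UNIV" unfolding F_def by (rule has_sum_product[OF h5 h6])
  have HX: "((\<lambda>(s,t). tf q 4 1 (-1) s * tf q 4 1 (-1) t) has_sum (X*X)) UNIV" by (rule has_sum_product[OF hX hX])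
  have HY: "((\<lambda>(s,t). q * (tf q 4 3 (-1) s * tf q 4 3 (-1) t)) has_sum (q*(Y*Y))) UNIV"
    using has_sum_cmult_right[OF has_sum_product[OF hY hY], of q] by (simp add: case_prod_unfold)
  have P1: "F (s+t, s-t) = tf q 4 1 (-1) s * tf q 4 1 (-1) t" for s t
  proof -
    have e: "int 2*(s+t)*(s+t) + int 1*(s+t) + (int 2*(s-t)*(s-t) + int 0*(s-t)) = int 4* s* s + int 1* s + (int 4* t* t + int 1* t)"
      by (simp add: algebra_simps)
    have g: "1 powi (s+t) * (-1) powi (s-t) = ((-1) powi s * (-1) powi t :: complex)"
      by (simp add: neg1_powi sg_diff)
    show ?thesis unfolding F_def case_prod_conv tf_mult[OF q] e g ..
  qed
  have P2: "F (-(s+t)-1, t-s) = q * (tf q 4 3 (-1) s * tf q 4 3 (-1) t)" for s t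
  proof -
    have e: "int 2*(-(s+t)-1)*(-(s+t)-1) + int 1*(-(s+t)-1) + (int 2*(t-s)*(t-s) + int 0*(t-s)) = 1 + (int 4* s* s + int 3* s + (int 4* t* t + int 3* t))"
      by (simp add: algebra_simps)
    have g: "1 powi (-(s+t)-1) * (-1) powi (t-s) = ((-1) powi s * (-1) powi t :: complex)"
      by (simp add: neg1_powi sg_diff sg_uminus)
    have h: "q powi (1 + E) = q * q powi E" for E using power_int_add[OF disjI1[OF q], of 1 E] by simp
    show ?thesis unfolding F_def case_prod_conv tf_mult[OF q] e g h by simp
  qed
  have E: "(F has_sum (X*X)) {(m,n). even (m+n)}"
  proof -
    have "((\<lambda>(s,t). tf q 4 1 (-1) s * tf q 4 1 (-1) t) has_sum (X*X)) UNIV = (F has_sum (X*X)) {(m,n). even (m+n)}"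
    proof (rule has_sum_reindex_bij_witness[where j = "\<lambda>(s,t). (s+t, s-t)" and i = "\<lambda>(m,n). ((m+n) div 2, (m-n) div 2)"])
      fix a :: "int \<times> int" obtain s t where a: "a = (s,t)" by (cases a)
      show "(\<lambda>(m,n). ((m+n) div 2, (m-n) div 2)) ((\<lambda>(s,t). (s+t, s-t)) a) = a" unfolding a by simp
      show "(\<lambda>(s,t). (s+t, s-t)) a \<in> {(m,n). even (m+n)}" unfolding a by simp
      show "F ((\<lambda>(s,t). (s+t, s-t)) a) = (\<lambda>(s,t). tf q 4 1 (-1) s * tf q 4 1 (-1) t) a" unfolding a using P1 by simp
    next
      fix b :: "int \<times> int" assume b: "b \<in> {(m,n). even (m+n)}"
      obtain m n where bb: "b = (m,n)" by (cases b)
      from b bb have "even (m+n)" by simp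
      then obtain k where k: "m + n = 2*k" by (rule evenE)
      then have "m - n = 2*(k - n)" by simp
      then have d: "(m+n) div 2 = k" "(m-n) div 2 = k - n" using k by simp_all
      show "(\<lambda>(s,t). (s+t, s-t)) ((\<lambda>(m,n). ((m+n) div 2, (m-n) div 2)) b) = b" unfolding bb using k by (simp add: d)
      show "(\<lambda>(m,n). ((m+n) div 2, (m-n) div 2)) b \<in> UNIV" by simp
    qed simp
    then show ?thesis using HX by simp
  qed
  have O: "(F has_sum (q*(Y*Y))) {(m,n). odd (m+n)}"
  proof -
    have "((\<lambda>(s,t). q * (tf q 4 3 (-1) s * tf q 4 3 (-1) t)) has_sum (q*(Y*Y))) UNIV = (F has_sum (q*(Y*Y))) {(m,n). odd (m+n)}"
    proof (rule has_sum_reindex_bij_witness[where j = "\<lambda>(s,t). (-(s+t)-1, t-s)" and i = "\<lambda>(m,n). (-((m+n+1) div 2), n - (m+n+1) div 2)"])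
      fix a :: "int \<times> int" obtain s t where a: "a = (s,t)" by (cases a)
      have h: "(-(s+t)-1 + (t-s) + 1) = 2*(-s)" by simp
      have "(-(s+t)-1 + (t-s) + 1) div 2 = -s" unfolding h by (rule nonzero_mult_div_cancel_left) simp
      then show "(\<lambda>(m,n). (-((m+n+1) div 2), n - (m+n+1) div 2)) ((\<lambda>(s,t). (-(s+t)-1, t-s)) a) = a" unfolding a by simp
      have "-(s+t)-1 + (t-s) = 2*(-s) - 1" by simp
      then show "(\<lambda>(s,t). (-(s+t)-1, t-s)) a \<in> {(m,n). odd (m+n)}" unfolding a by simp
      show "F ((\<lambda>(s,t). (-(s+t)-1, t-s)) a) = (\<lambda>(s,t). q * (tf q 4 3 (-1) s * tf q 4 3 (-1) t)) a" unfolding a using P2 by simp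
    next
      fix b :: "int \<times> int" assume b: "b \<in> {(m,n). odd (m+n)}"
      obtain m n where bb: "b = (m,n)" by (cases b)
      from b bb have "odd (m+n)" by simp
      then obtain k where k: "m + n = 2*k + 1" by (rule oddE)
      then have "(m+n+1) div 2 = k + 1" by simp
      then show "(\<lambda>(s,t). (-(s+t)-1, t-s)) ((\<lambda>(m,n). (-((m+n+1) div 2), n - (m+n+1) div 2)) b) = b" unfolding bb using k by simp
      show "(\<lambda>(m,n). (-((m+n+1) div 2), n - (m+n+1) div 2)) b \<in> UNIV" by simp
    qed simp
    then show ?thesis using HY by simp
  qed
  have "(F has_sum (X*X + q*(Y*Y))) ({(m,n). even (m+n)} \<union> {(m,n). odd (m+n)})"
    by (rule has_sum_Un_disjoint[OF E O]) auto
  moreover have "{(m,n). even (m+n)} \<union> {(m,n). odd ((m::int)+n)} = UNIV" by auto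
  ultimately have "(F has_sum (X*X + q*(Y*Y))) UNIV" by simp
  then have "S5*S6 = X*X + q*(Y*Y)" using HP has_sum_unique by blast
  then show ?thesis by (simp add: power2_eq_square)
qed



lemma fac_gen:
  fixes x c :: complex
  assumes x: "x \<noteq> 0" and c: "c = 1 \<or> c = -1" and ba: "b \<le> a"
  shows "(1 - (x^a)^(2*n+2)) * ((1 + (c*x^b)*(x^a)^(2*n+1)) * (1 + (x^a)^(2*n+1)/(c*x^b)))
       = (1 - x^((2*a)*n + 2*a)) * ((1 + c*x^((2*a)*n + (a+b))) * (1 + c*x^((2*a)*n + (a-b))))"
proof -
  have x1: "a*(2*n+2) = (2*a)*n + 2*a" "b + a*(2*n+1) = (2*a)*n + (a+b)" by (simp_all add: algebra_simps)
  have e1: "(x^a)^(2*n+2) = x^((2*a)*n + 2*a)" unfolding power_mult[symmetric] x1 ..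
  have e2: "(c*x^b)*(x^a)^(2*n+1) = c*x^((2*a)*n + (a+b))"
    unfolding power_mult[symmetric] mult.assoc power_add[symmetric] x1 ..
  have e3: "(x^a)^(2*n+1)/(c*x^b) = c*x^((2*a)*n + (a-b))"
  proof -
    have x2: "a*(2*n+1) = (2*a)*n + (a-b) + b" using ba by (simp add: algebra_simps)
    have "(x^a)^(2*n+1) = x^((2*a)*n + (a-b)) * x^b"
      unfolding power_mult[symmetric] power_add[symmetric] x2 ..
    moreover have "1/c = c" using c by auto
    ultimately show ?thesis using x c by (auto simp: field_simps)
  qed
  show ?thesis unfolding e1 e2 e3 ..
qed

lemma pmin: "norm x < 1 \<Longrightarrow> a * k = 16 \<Longrightarrow> pp (\<lambda>n. 1 - x^(a*n+b)) (Pm x a b)"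
  by (rule pp_minus)

definition Pl :: "complex \<Rightarrow> nat \<Rightarrow> nat \<Rightarrow> complex" where
  "Pl x a b = Pm x (2*a) (2*b) / Pm x a b"

lemma pplus: "norm x < 1 \<Longrightarrow> a * k = 16 \<Longrightarrow> even k \<Longrightarrow> b > 0 \<Longrightarrow> pp (\<lambda>n. 1 + x^(a*n+b)) (Pl x a b)"
  unfolding Pl_def by (rule pp_plus)

lemma Pl_nz: "norm x < 1 \<Longrightarrow> b > 0 \<Longrightarrow> Pl x a b \<noteq> 0"
  unfolding Pl_def using Pm_nz by auto

context
  fixes x :: complex
  assumes x: "norm x < 1" "x \<noteq> 0"
begin

lemma inst_S1: "\<exists>S. (tf x 1 0 1 has_sum S) UNIV \<and> S = Pm x 2 2 * Pl x 2 1 ^ 2"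
proof -
  obtain S where S: "(tf x 1 0 1 has_sum S) UNIV"
    "pp (\<lambda>n. (1 - (x^1)^(2*n+2)) * ((1 + (1*x^0)*(x^1)^(2*n+1)) * (1 + (x^1)^(2*n+1)/(1*x^0)))) S"
    using tf_inst[OF x, of 1 1 0] by auto
  have P: "pp (\<lambda>n. (1 - x^(2*n+2)) * (1 + x^(2*n+1))^2) (Pm x 2 2 * Pl x 2 1 ^ 2)"
    by (rule pp_mult[OF pmin[OF x(1), of 2 8] pp_power[OF pplus[OF x(1), of 2 8]]]) auto
  have "(1 - (x^1)^(2*n+2)) * ((1 + (1*x^0)*(x^1)^(2*n+1)) * (1 + (x^1)^(2*n+1)/(1*x^0)))
        = (1 - x^(2*n+2)) * (1 + x^(2*n+1))^2" for n
    using fac_gen[OF x(2), of 1 0 1 n] by (simp add: power2_eq_square)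
  then have "pp (\<lambda>n. (1 - x^(2*n+2)) * (1 + x^(2*n+1))^2) S" by (intro pp_cong[OF S(2)]) auto
  then show ?thesis using S(1) P pp_unique by blast
qed


lemma inst_S2: "\<exists>S. (tf x 1 0 (-1) has_sum S) UNIV \<and> S = Pm x 2 2 * Pm x 2 1 ^ 2"
proof -
  obtain S where S: "(tf x 1 0 (-1) has_sum S) UNIV"
    "pp (\<lambda>n. (1 - (x^1)^(2*n+2)) * ((1 + (-1*x^0)*(x^1)^(2*n+1)) * (1 + (x^1)^(2*n+1)/(-1*x^0)))) S"
    using tf_inst[OF x, of "-1" 1 0] by auto
  have P: "pp (\<lambda>n. (1 - x^(2*n+2)) * (1 - x^(2*n+1))^2) (Pm x 2 2 * Pm x 2 1 ^ 2)"
    by (rule pp_mult[OF pmin[OF x(1), of 2 8] pp_power[OF pmin[OF x(1), of 2 8]]]) auto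
  have "(1 - (x^1)^(2*n+2)) * ((1 + (-1*x^0)*(x^1)^(2*n+1)) * (1 + (x^1)^(2*n+1)/(-1*x^0)))
        = (1 - x^(2*n+2)) * (1 - x^(2*n+1))^2" for n
    using fac_gen[OF x(2), of "-1" 0 1 n] by (simp add: power2_eq_square)
  then have "pp (\<lambda>n. (1 - x^(2*n+2)) * (1 - x^(2*n+1))^2) S" by (intro pp_cong[OF S(2)]) auto
  then show ?thesis using S(1) P pp_unique by blast
qed

lemma inst_S3: "\<exists>S. (tf x 4 0 1 has_sum S) UNIV \<and> S = Pm x 8 8 * Pl x 8 4 ^ 2"
proof -
  obtain S where S: "(tf x 4 0 1 has_sum S) UNIV"
    "pp (\<lambda>n. (1 - (x^4)^(2*n+2)) * ((1 + (1*x^0)*(x^4)^(2*n+1)) * (1 + (x^4)^(2*n+1)/(1*x^0)))) S"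
    using tf_inst[OF x, of 1 4 0] by auto
  have P: "pp (\<lambda>n. (1 - x^(8*n+8)) * (1 + x^(8*n+4))^2) (Pm x 8 8 * Pl x 8 4 ^ 2)"
    by (rule pp_mult[OF pmin[OF x(1), of 8 2] pp_power[OF pplus[OF x(1), of 8 2]]]) auto
  have "(1 - (x^4)^(2*n+2)) * ((1 + (1*x^0)*(x^4)^(2*n+1)) * (1 + (x^4)^(2*n+1)/(1*x^0)))
        = (1 - x^(8*n+8)) * (1 + x^(8*n+4))^2" for n
    using fac_gen[OF x(2), of 1 0 4 n] by (simp add: power2_eq_square)
  then have "pp (\<lambda>n. (1 - x^(8*n+8)) * (1 + x^(8*n+4))^2) S" by (intro pp_cong[OF S(2)]) auto
  then show ?thesis using S(1) P pp_unique by blast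
qed

lemma inst_S5: "\<exists>S. (tf x 2 1 1 has_sum S) UNIV \<and> S = Pm x 4 4 * Pl x 4 3 * Pl x 4 1"
proof -
  obtain S where S: "(tf x 2 1 1 has_sum S) UNIV"
    "pp (\<lambda>n. (1 - (x^2)^(2*n+2)) * ((1 + (1*x^1)*(x^2)^(2*n+1)) * (1 + (x^2)^(2*n+1)/(1*x^1)))) S"
    using tf_inst[OF x, of 1 2 1] by auto
  have P: "pp (\<lambda>n. (1 - x^(4*n+4)) * (1 + x^(4*n+3)) * (1 + x^(4*n+1))) (Pm x 4 4 * Pl x 4 3 * Pl x 4 1)"
    by (rule pp_mult[OF pp_mult[OF pmin[OF x(1), of 4 4] pplus[OF x(1), of 4 4]] pplus[OF x(1), of 4 4]]) auto
  have "(1 - (x^2)^(2*n+2)) * ((1 + (1*x^1)*(x^2)^(2*n+1)) * (1 + (x^2)^(2*n+1)/(1*x^1)))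
        = (1 - x^(4*n+4)) * (1 + x^(4*n+3)) * (1 + x^(4*n+1))" for n
    using fac_gen[OF x(2), of 1 1 2 n] by (simp add: mult.assoc)
  then have "pp (\<lambda>n. (1 - x^(4*n+4)) * (1 + x^(4*n+3)) * (1 + x^(4*n+1))) S" by (intro pp_cong[OF S(2)]) auto
  then show ?thesis using S(1) P pp_unique by blast
qed

lemma inst_S6: "\<exists>S. (tf x 2 0 (-1) has_sum S) UNIV \<and> S = Pm x 4 4 * Pm x 4 2 ^ 2"
proof -
  obtain S where S: "(tf x 2 0 (-1) has_sum S) UNIV"
    "pp (\<lambda>n. (1 - (x^2)^(2*n+2)) * ((1 + (-1*x^0)*(x^2)^(2*n+1)) * (1 + (x^2)^(2*n+1)/(-1*x^0)))) S"
    using tf_inst[OF x, of "-1" 2 0] by auto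
  have P: "pp (\<lambda>n. (1 - x^(4*n+4)) * (1 - x^(4*n+2))^2) (Pm x 4 4 * Pm x 4 2 ^ 2)"
    by (rule pp_mult[OF pmin[OF x(1), of 4 4] pp_power[OF pmin[OF x(1), of 4 4]]]) auto
  have "(1 - (x^2)^(2*n+2)) * ((1 + (-1*x^0)*(x^2)^(2*n+1)) * (1 + (x^2)^(2*n+1)/(-1*x^0)))
        = (1 - x^(4*n+4)) * (1 - x^(4*n+2))^2" for n
    using fac_gen[OF x(2), of "-1" 0 2 n] by (simp add: power2_eq_square)
  then have "pp (\<lambda>n. (1 - x^(4*n+4)) * (1 - x^(4*n+2))^2) S" by (intro pp_cong[OF S(2)]) auto
  then show ?thesis using S(1) P pp_unique by blast
qed

lemma inst_X: "\<exists>S. (tf x 4 1 (-1) has_sum S) UNIV \<and> S = Pm x 8 8 * Pm x 8 5 * Pm x 8 3"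
proof -
  obtain S where S: "(tf x 4 1 (-1) has_sum S) UNIV"
    "pp (\<lambda>n. (1 - (x^4)^(2*n+2)) * ((1 + (-1*x^1)*(x^4)^(2*n+1)) * (1 + (x^4)^(2*n+1)/(-1*x^1)))) S"
    using tf_inst[OF x, of "-1" 4 1] by auto
  have P: "pp (\<lambda>n. (1 - x^(8*n+8)) * (1 - x^(8*n+5)) * (1 - x^(8*n+3))) (Pm x 8 8 * Pm x 8 5 * Pm x 8 3)"
    by (rule pp_mult[OF pp_mult[OF pmin[OF x(1), of 8 2] pmin[OF x(1), of 8 2]] pmin[OF x(1), of 8 2]]) auto
  have "(1 - (x^4)^(2*n+2)) * ((1 + (-1*x^1)*(x^4)^(2*n+1)) * (1 + (x^4)^(2*n+1)/(-1*x^1)))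
        = (1 - x^(8*n+8)) * (1 - x^(8*n+5)) * (1 - x^(8*n+3))" for n
    using fac_gen[OF x(2), of "-1" 1 4 n] by (simp add: mult.assoc)
  then have "pp (\<lambda>n. (1 - x^(8*n+8)) * (1 - x^(8*n+5)) * (1 - x^(8*n+3))) S" by (intro pp_cong[OF S(2)]) auto
  then show ?thesis using S(1) P pp_unique by blast
qed

lemma inst_Y: "\<exists>S. (tf x 4 3 (-1) has_sum S) UNIV \<and> S = Pm x 8 8 * Pm x 8 7 * Pm x 8 1"
proof -
  obtain S where S: "(tf x 4 3 (-1) has_sum S) UNIV"
    "pp (\<lambda>n. (1 - (x^4)^(2*n+2)) * ((1 + (-1*x^3)*(x^4)^(2*n+1)) * (1 + (x^4)^(2*n+1)/(-1*x^3)))) S"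
    using tf_inst[OF x, of "-1" 4 3] by auto
  have P: "pp (\<lambda>n. (1 - x^(8*n+8)) * (1 - x^(8*n+7)) * (1 - x^(8*n+1))) (Pm x 8 8 * Pm x 8 7 * Pm x 8 1)"
    by (rule pp_mult[OF pp_mult[OF pmin[OF x(1), of 8 2] pmin[OF x(1), of 8 2]] pmin[OF x(1), of 8 2]]) auto
  have "(1 - (x^4)^(2*n+2)) * ((1 + (-1*x^3)*(x^4)^(2*n+1)) * (1 + (x^4)^(2*n+1)/(-1*x^3)))
        = (1 - x^(8*n+8)) * (1 - x^(8*n+7)) * (1 - x^(8*n+1))" for n
    using fac_gen[OF x(2), of "-1" 3 4 n] by (simp add: mult.assoc)
  then have "pp (\<lambda>n. (1 - x^(8*n+8)) * (1 - x^(8*n+7)) * (1 - x^(8*n+1))) S" by (intro pp_cong[OF S(2)]) auto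
  then show ?thesis using S(1) P pp_unique by blast
qed

lemma inst_S4: "\<exists>S. (tf x 4 4 1 has_sum S) UNIV \<and> S = 2 * Pm x 8 8 * Pl x 8 8 ^ 2"
proof -
  obtain S where S: "(tf x 4 4 1 has_sum S) UNIV"
    "pp (\<lambda>n. (1 - (x^4)^(2*n+2)) * ((1 + (1*x^4)*(x^4)^(2*n+1)) * (1 + (x^4)^(2*n+1)/(1*x^4)))) S"
    using tf_inst[OF x, of 1 4 4] by auto
  have "(1 - (x^4)^(2*n+2)) * ((1 + (1*x^4)*(x^4)^(2*n+1)) * (1 + (x^4)^(2*n+1)/(1*x^4)))
        = ((1 - x^(8*n+8)) * (1 + x^(8*n+8))) * (1 + x^(8*n))" for n
    using fac_gen[OF x(2), of 1 4 4 n] by (simp add: mult.assoc)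
  then have S2: "pp (\<lambda>n. ((1 - x^(8*n+8)) * (1 + x^(8*n+8))) * (1 + x^(8*n))) S" by (intro pp_cong[OF S(2)]) auto
  have P: "pp (\<lambda>n. (1 - x^(8*n+8)) * (1 + x^(8*n+8))) (Pm x 8 8 * Pl x 8 8)"
    by (rule pp_mult[OF pmin[OF x(1), of 8 2] pplus[OF x(1), of 8 2]]) auto
  have nz: "Pm x 8 8 * Pl x 8 8 \<noteq> 0" using Pm_nz[OF x(1)] Pl_nz[OF x(1)] by simp
  have fnz: "(1 - x^(8*n+8)) * (1 + x^(8*n+8)) \<noteq> 0" for n
    using one_minus_pow_nz[OF x(1), of "8*n+8"] one_plus_pow_nz[OF x(1), of "8*n+8"] by simp
  have H: "pp (\<lambda>n. 1 + x^(8*n)) (S / (Pm x 8 8 * Pl x 8 8))"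
    by (rule pp_cong[OF pp_divide[OF S2 P nz]]) (use fnz in auto)
  have H1: "pp (\<lambda>n. 1 + x^(8*Suc n)) (S / (Pm x 8 8 * Pl x 8 8) / 2)"
    using pp_shift[OF H] by simp
  have H2: "pp (\<lambda>n. 1 + x^(8*Suc n)) (Pl x 8 8)"
    using pplus[OF x(1), of 8 2 8] by (simp add: add.commute)
  have "S / (Pm x 8 8 * Pl x 8 8) / 2 = Pl x 8 8" using pp_unique[OF H1 H2] .
  then have "S = 2 * Pm x 8 8 * Pl x 8 8 ^ 2" using nz by (simp add: field_simps power2_eq_square)
  then show ?thesis using S(1) by blast
qed

end



lemma pw_split1:
  fixes x :: complex
  assumes x: "x \<noteq> 0"
  shows "x powi (E + 1) = x * x powi E"
  using power_int_add[OF disjI1[OF x], of E 1] by (simp add: mult.commute)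

lemma tf_even: "tf x 1 0 c (2*m) = tf x 4 0 1 m" if "c = 1 \<or> c = -1"
proof -
  have e: "int 1 * (2*m) * (2*m) + int 0 * (2*m) = int 4 * m * m + int 0 * m" by (simp add: algebra_simps)
  have c: "c powi (2*m) = 1" using that by (auto simp: neg1_powi sg_def)
  show ?thesis unfolding tf_def e c by simp
qed

lemma tf_odd1: "x \<noteq> 0 \<Longrightarrow> tf x 1 0 1 (2*m+1) = x * tf x 4 4 1 m"
proof -
  assume x: "x \<noteq> 0"
  have e: "int 1 * (2*m+1) * (2*m+1) + int 0 * (2*m+1) = (int 4 * m * m + int 4 * m) + 1" by (simp add: algebra_simps)
  show ?thesis unfolding tf_def e pw_split1[OF x] by simp
qed

lemma tf_odd2: "x \<noteq> 0 \<Longrightarrow> tf x 1 0 (-1) (2*m+1) = - x * tf x 4 4 1 m"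
proof -
  assume x: "x \<noteq> 0"
  have e: "int 1 * (2*m+1) * (2*m+1) + int 0 * (2*m+1) = (int 4 * m * m + int 4 * m) + 1" by (simp add: algebra_simps)
  have c: "(-1::complex) powi (2*m+1) = -1" by (simp add: neg1_powi sg_def)
  show ?thesis unfolding tf_def e pw_split1[OF x] c by simp
qed

lemma final_alg:
  fixes x S1 S2 S3 S4 S5 S6 X Y v2 T :: complex
  assumes nz: "x \<noteq> 0" "S1 \<noteq> 0" "S2 \<noteq> 0" "X \<noteq> 0" "S5 \<noteq> 0" "S6 \<noteq> 0"
    and a1: "S1 = S3 + x * S4" and a2: "S2 = S3 - x * S4"
    and c: "S5 * S6 = X^2 + x * Y^2"
    and pr: "S4 * S3 * (S5 * S6)^2 = 2 * S1^2 * X^2 * Y^2"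
    and v: "v2 = x * (Y / X)^2" and t: "T = S2 / S1"
  shows "(v2 + 1)^2 / (v2^2 - 6 * v2 + 1) = 4 / (2 * T)^2"
proof -
  have h1: "v2 + 1 = S5 * S6 / X^2" using v c nz by (simp add: field_simps)
  have h2a: "1 - T^2 = (S1^2 - S2^2) / S1^2" unfolding t using nz by (simp add: field_simps power2_eq_square)
  have h2b: "S1^2 - S2^2 = 4 * x * S3 * S4" unfolding a1 a2 by (simp add: algebra_simps power2_eq_square)
  have h2: "1 - T^2 = 4 * x * S3 * S4 / S1^2" unfolding h2a h2b ..
  have h3: "(1 - T^2) * (v2 + 1)^2 = 8 * v2"
  proof -
    have "(1 - T^2) * (v2 + 1)^2 = 4 * x * (S4 * S3 * (S5 * S6)^2) / (S1^2 * X^4)"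
      unfolding h1 h2 using nz by (simp add: field_simps power2_eq_square power4_eq_xxxx)
    also have "\<dots> = 8 * x * Y^2 / X^2" unfolding pr using nz by (simp add: field_simps power2_eq_square power4_eq_xxxx)
    also have "\<dots> = 8 * v2" using v nz by (simp add: field_simps)
    finally show ?thesis .
  qed
  have h4: "v2^2 - 6 * v2 + 1 = T^2 * (v2 + 1)^2"
  proof -
    have "v2^2 - 6 * v2 + 1 = (v2 + 1)^2 - 8 * v2" by (simp add: algebra_simps power2_eq_square)
    also have "\<dots> = T^2 * (v2 + 1)^2" unfolding h3[symmetric] by (simp add: algebra_simps)
    finally show ?thesis .
  qed
  have n1: "v2 + 1 \<noteq> 0" unfolding h1 using nz by simp
  have n2: "T \<noteq> 0" unfolding t using nz by simp
  have "(v2 + 1)^2 / (T^2 * (v2 + 1)^2) = 1 / T^2" using n1 by simp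
  moreover have "4 / (2 * T)^2 = 1 / T^2" by (simp add: power_mult_distrib)
  ultimately show ?thesis unfolding h4 by simp
qed



lemma Pm_vals:
  "Pm x 2 2 = At x 2 * At x 4 * At x 6 * At x 8 * At x 10 * At x 12 * At x 14 * At x 16"
  "Pm x 2 1 = At x 1 * At x 3 * At x 5 * At x 7 * At x 9 * At x 11 * At x 13 * At x 15"
  "Pm x 4 4 = At x 4 * At x 8 * At x 12 * At x 16"
  "Pm x 4 2 = At x 2 * At x 6 * At x 10 * At x 14"
  "Pm x 4 1 = At x 1 * At x 5 * At x 9 * At x 13"
  "Pm x 4 3 = At x 3 * At x 7 * At x 11 * At x 15"
  "Pm x 8 1 = At x 1 * At x 9" "Pm x 8 2 = At x 2 * At x 10" "Pm x 8 3 = At x 3 * At x 11"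
  "Pm x 8 4 = At x 4 * At x 12" "Pm x 8 5 = At x 5 * At x 13" "Pm x 8 6 = At x 6 * At x 14"
  "Pm x 8 7 = At x 7 * At x 15" "Pm x 8 8 = At x 8 * At x 16"
  "Pm x 16 8 = At x 8" "Pm x 16 16 = At x 16"
  by (simp_all add: Pm_def lessThan_nat_numeral mult_ac flip: numeral_2_eq_2)

lemma Pl_vals:
  "Pl x 2 1 = Pm x 4 2 / Pm x 2 1" "Pl x 8 4 = Pm x 16 8 / Pm x 8 4" "Pl x 8 8 = Pm x 16 16 / Pm x 8 8"
  "Pl x 4 3 = Pm x 8 6 / Pm x 4 3" "Pl x 4 1 = Pm x 8 2 / Pm x 4 1"
  by (simp_all add: Pl_def)

lemma prod_ident:
  assumes x: "norm x < 1"
  shows "(2 * Pm x 8 8 * Pl x 8 8 ^ 2) * (Pm x 8 8 * Pl x 8 4 ^ 2) * ((Pm x 4 4 * Pl x 4 3 * Pl x 4 1) * (Pm x 4 4 * Pm x 4 2 ^ 2))^2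
       = 2 * (Pm x 2 2 * Pl x 2 1 ^ 2)^2 * (Pm x 8 8 * Pm x 8 5 * Pm x 8 3)^2 * (Pm x 8 8 * Pm x 8 7 * Pm x 8 1)^2"
proof -
  have nz: "At x r \<noteq> 0" if "r > 0" for r using At_nz[OF x that] .
  note n = nz[of 1] nz[of 2] nz[of 3] nz[of 4] nz[of 5] nz[of 6] nz[of 7] nz[of 8]
           nz[of 9] nz[of 10] nz[of 11] nz[of 12] nz[of 13] nz[of 14] nz[of 15] nz[of 16]
  show ?thesis unfolding Pl_vals unfolding Pm_vals using n by (simp add: field_simps power2_eq_square)
qed



lemma kron8_cases: "kron8 n = 0 \<or> kron8 n = 1 \<or> kron8 n = -1"
  unfolding kron8_def by auto

lemma kron8_shift: "kron8 (8*m + s) = kron8 s"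
proof -
  have "(8*m + s) mod 8 = s mod 8" by simp
  moreover have "even (8*m + s) = even s" by simp
  ultimately show ?thesis unfolding kron8_def by simp
qed

lemma V_prod:
  fixes x :: complex
  assumes x: "norm x < 1"
  shows "(\<Prod>m. (1 - x^(Suc m)) powi kron8 (Suc m)) = (Pm x 8 7 * Pm x 8 1) / (Pm x 8 5 * Pm x 8 3)"
proof -
  define f where "f m = (1 - x^(Suc m)) powi kron8 (Suc m)" for m
  define C where "C = 1 / (1 - norm x)"
  have C: "C \<ge> 1" unfolding C_def using x norm_ge_zero[of x] by (simp add: field_simps)
  have bd: "norm (f m - 1) \<le> C * norm x ^ Suc m" for m
  proof -
    define w where "w = x^(Suc m)"
    have nw: "norm w = norm x ^ Suc m" unfolding w_def by (simp only: norm_power)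
    have nw1: "norm w \<le> norm x" unfolding nw using x by (simp add: power_le_one mult_left_le)
    have w1: "1 - w \<noteq> 0" unfolding w_def by (rule one_minus_pow_nz[OF x]) simp
    consider "kron8 (Suc m) = 0" | "kron8 (Suc m) = 1" | "kron8 (Suc m) = -1" using kron8_cases by blast
    then show ?thesis
    proof cases
      case 1 then show ?thesis unfolding f_def using C by simp
    next
      case 2
      have "norm (f m - 1) = norm w" unfolding f_def 2 w_def by (simp add: norm_minus_commute)
      also have "\<dots> \<le> C * norm w" using mult_right_mono[OF C norm_ge_zero[of w]] by simp
      finally show ?thesis unfolding nw .
    next
      case 3
      have "f m - 1 = w / (1 - w)" unfolding f_def 3 w_def[symmetric] using w1
        by (simp add: power_int_minus field_simps)
      then have "norm (f m - 1) = norm w / norm (1 - w)" by (simp add: norm_divide)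
      also have "\<dots> \<le> norm w / (1 - norm x)"
      proof (rule divide_left_mono)
        have "1 - norm w \<le> norm (1 - w)" using norm_triangle_ineq2[of 1 w] by simp
        then show "1 - norm x \<le> norm (1 - w)" using nw1 by simp
        show "0 < norm (1 - w) * (1 - norm x)" using w1 x by simp
      qed simp
      also have "\<dots> = C * norm w" unfolding C_def by simp
      finally show ?thesis unfolding nw .
    qed
  qed
  have sm: "summable (\<lambda>m. norm (f m - 1))"
  proof (rule summable_comparison_test[OF _ summable_mult[OF summable_ignore_initial_segment[OF summable_geometric[of "norm x"], of 1], of C]])
    show "\<exists>N. \<forall>n\<ge>N. norm (norm (f n - 1)) \<le> C * norm x ^ (n + 1)" using bd by simp
  qed (use x in simp)
  have P0: "pp f (prodinf f)" by (rule pp_prodinf(1)[OF sm])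
  have P1: "pp (\<lambda>m. \<Prod>r<8. f (8*m+r)) (prodinf f)" using pp_group[OF P0, of 8] by simp
  have blk: "(\<Prod>r<8. f (8*m+r)) = ((1 - x^(8*m+7)) * (1 - x^(8*m+1))) / ((1 - x^(8*m+5)) * (1 - x^(8*m+3)))" for m
  proof -
    define g where "g r = (1 - x^(8*m+Suc r)) powi kron8 (Suc r)" for r
    have fr: "f (8*m+r) = g r" for r
      unfolding f_def g_def using kron8_shift[of m "Suc r"] by simp
    have gv: "g 0 = 1 - x^(8*m+1)" "g 1 = 1" "g 2 = inverse (1 - x^(8*m+3))" "g 3 = 1"
             "g 4 = inverse (1 - x^(8*m+5))" "g 5 = 1" "g 6 = 1 - x^(8*m+7)" "g 7 = 1"
      by (simp_all add: g_def kron8_def power_int_minus)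
    have "(\<Prod>r<8. f (8*m+r)) = (\<Prod>r<8. g r)" by (simp add: fr)
    also have "\<dots> = g 0 * g 1 * g 2 * g 3 * g 4 * g 5 * g 6 * g 7"
      by (simp add: lessThan_nat_numeral mult_ac flip: numeral_2_eq_2)
    also have "\<dots> = (1 - x^(8*m+1)) * inverse (1 - x^(8*m+3)) * inverse (1 - x^(8*m+5)) * (1 - x^(8*m+7))"
      unfolding gv by simp
    finally show ?thesis by (simp add: field_simps)
  qed
  have P2: "pp (\<lambda>m. ((1 - x^(8*m+7)) * (1 - x^(8*m+1))) / ((1 - x^(8*m+5)) * (1 - x^(8*m+3))))
               ((Pm x 8 7 * Pm x 8 1) / (Pm x 8 5 * Pm x 8 3))"
    by (rule pp_divide[OF pp_mult[OF pmin[OF x, of 8 2] pmin[OF x, of 8 2]] pp_mult[OF pmin[OF x, of 8 2] pmin[OF x, of 8 2]]])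
       (use Pm_nz[OF x] in auto)
  have "prodinf f = (Pm x 8 7 * Pm x 8 1) / (Pm x 8 5 * Pm x 8 3)"
    using pp_unique[OF P1] P2 blk by simp
  then show ?thesis unfolding f_def .
qed

lemma T_prod:
  fixes x :: complex
  assumes x: "norm x < 1"
  shows "(\<Prod>m. ((1 - x^(2*m+1)) / (1 + x^(2*m+1)))^2) = (Pm x 2 2 * Pm x 2 1 ^ 2) / (Pm x 2 2 * Pl x 2 1 ^ 2)"
proof -
  have P2: "pp (\<lambda>n. (1 - x^(2*n+2)) * (1 - x^(2*n+1))^2) (Pm x 2 2 * Pm x 2 1 ^ 2)"
    by (rule pp_mult[OF pmin[OF x, of 2 8] pp_power[OF pmin[OF x, of 2 8]]]) auto
  have P1: "pp (\<lambda>n. (1 - x^(2*n+2)) * (1 + x^(2*n+1))^2) (Pm x 2 2 * Pl x 2 1 ^ 2)"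
    by (rule pp_mult[OF pmin[OF x, of 2 8] pp_power[OF pplus[OF x, of 2 8]]]) auto
  have nz: "Pm x 2 2 * Pl x 2 1 ^ 2 \<noteq> 0" "Pm x 2 2 * Pm x 2 1 ^ 2 \<noteq> 0"
    using Pm_nz[OF x] Pl_nz[OF x] by auto
  have P: "pp (\<lambda>n. ((1 - x^(2*n+2)) * (1 - x^(2*n+1))^2) / ((1 - x^(2*n+2)) * (1 + x^(2*n+1))^2))
              ((Pm x 2 2 * Pm x 2 1 ^ 2) / (Pm x 2 2 * Pl x 2 1 ^ 2))"
    by (rule pp_divide[OF P2 P1 nz(1)])
  have e: "((1 - x^(2*n+2)) * (1 - x^(2*n+1))^2) / ((1 - x^(2*n+2)) * (1 + x^(2*n+1))^2)
           = ((1 - x^(2*n+1)) / (1 + x^(2*n+1)))^2" for n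
  proof -
    have "1 - x^(2*n+2) \<noteq> 0" by (rule one_minus_pow_nz[OF x]) simp
    then show ?thesis by (simp add: power_divide)
  qed
  have "pp (\<lambda>n. ((1 - x^(2*n+1)) / (1 + x^(2*n+1)))^2) ((Pm x 2 2 * Pm x 2 1 ^ 2) / (Pm x 2 2 * Pl x 2 1 ^ 2))"
    using P unfolding e .
  then show ?thesis by (rule pp_imp_prodinf) (use nz in simp)
qed



lemma qpow_nat: "qpow \<tau> (real n) = qpow \<tau> 1 ^ n"
proof -
  have "qpow \<tau> (real n) = exp (of_nat n * (2 * of_real pi * \<i> * of_real 1 * \<tau>))"
    unfolding qpow_def by (simp add: mult_ac)
  also have "\<dots> = qpow \<tau> 1 ^ n" unfolding qpow_def by (rule exp_of_nat_mult)
  finally show ?thesis .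
qed

lemma qpow_half: "qpow \<tau> (1/2) ^ 2 = qpow \<tau> 1"
proof -
  have "qpow \<tau> (1/2) ^ 2 = exp (of_nat 2 * (2 * of_real pi * \<i> * of_real (1/2) * \<tau>))"
    unfolding qpow_def by (rule exp_of_nat_mult[symmetric])
  also have "\<dots> = qpow \<tau> 1" unfolding qpow_def by (simp add: mult_ac)
  finally show ?thesis .
qed

lemma qpow_b: "qpow (4 * \<tau>) (real (Suc m) / 2 - 1/4) = qpow \<tau> 1 ^ (2*m+1)"
proof -
  have F: "of_real (real (Suc m) / 2 - 1/4) * (4 * \<tau>) = (of_real (real (2*m+1)) * \<tau> :: complex)"
  proof -
    have "(real (Suc m) / 2 - 1/4) * 4 = real (2*m+1)" by (simp add: field_simps)
    then have "(of_real (real (Suc m) / 2 - 1/4) :: complex) * 4 = of_real (real (2*m+1))"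
      by (metis of_real_mult of_real_numeral)
    then show ?thesis by (metis mult.assoc mult.commute)
  qed
  have "qpow (4 * \<tau>) (real (Suc m) / 2 - 1/4) = qpow \<tau> (real (2*m+1))"
    unfolding qpow_def by (simp only: mult.assoc[of "2 * of_real pi * \<i>"] F)
  also have "\<dots> = qpow \<tau> 1 ^ (2*m+1)" by (rule qpow_nat)
  finally show ?thesis .
qed

lemma qpow_norm: "Im \<tau> > 0 \<Longrightarrow> norm (qpow \<tau> 1) < 1"
  unfolding qpow_def by (simp add: norm_exp_eq_Re)

lemma qpow_nz: "qpow \<tau> 1 \<noteq> 0"
  unfolding qpow_def by simp



theorem proposition8:
  fixes \<tau> :: complex
  assumes "Im \<tau> > 0"
  shows "(v_fun \<tau> ^ 2 + 1) ^ 2 / (v_fun \<tau> ^ 4 - 6 * v_fun \<tau> ^ 2 + 1)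
         = 4 / (b_fun (4 * \<tau>)) ^ 2"
proof -
  define x where "x = qpow \<tau> 1"
  have x: "norm x < 1" "x \<noteq> 0" unfolding x_def using qpow_norm[OF assms] qpow_nz by auto
  obtain S1 where h1: "(tf x 1 0 1 has_sum S1) UNIV" and e1: "S1 = Pm x 2 2 * Pl x 2 1 ^ 2" using inst_S1[OF x] by blast
  obtain S2 where h2: "(tf x 1 0 (-1) has_sum S2) UNIV" and e2: "S2 = Pm x 2 2 * Pm x 2 1 ^ 2" using inst_S2[OF x] by blast
  obtain S3 where h3: "(tf x 4 0 1 has_sum S3) UNIV" and e3: "S3 = Pm x 8 8 * Pl x 8 4 ^ 2" using inst_S3[OF x] by blast
  obtain S4 where h4: "(tf x 4 4 1 has_sum S4) UNIV" and e4: "S4 = 2 * Pm x 8 8 * Pl x 8 8 ^ 2" using inst_S4[OF x] by blast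
  obtain S5 where h5: "(tf x 2 1 1 has_sum S5) UNIV" and e5: "S5 = Pm x 4 4 * Pl x 4 3 * Pl x 4 1" using inst_S5[OF x] by blast
  obtain S6 where h6: "(tf x 2 0 (-1) has_sum S6) UNIV" and e6: "S6 = Pm x 4 4 * Pm x 4 2 ^ 2" using inst_S6[OF x] by blast
  obtain X where hX: "(tf x 4 1 (-1) has_sum X) UNIV" and eX: "X = Pm x 8 8 * Pm x 8 5 * Pm x 8 3" using inst_X[OF x] by blast
  obtain Y where hY: "(tf x 4 3 (-1) has_sum Y) UNIV" and eY: "Y = Pm x 8 8 * Pm x 8 7 * Pm x 8 1" using inst_Y[OF x] by blast
  note pnz = Pm_nz[OF x(1)] Pl_nz[OF x(1)]
  have a1: "S1 = S3 + x * S4"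
  proof (rule parity_split[OF h1])
    have "(\<lambda>m. tf x 1 0 1 (2*m)) = tf x 4 0 1" by (rule ext) (rule tf_even, simp)
    then show "((\<lambda>m. tf x 1 0 1 (2*m)) has_sum S3) UNIV" using h3 by simp
    have E: "(\<lambda>m. tf x 1 0 1 (2*m+1)) = (\<lambda>m. x * tf x 4 4 1 m)" by (rule ext) (rule tf_odd1[OF x(2)])
    show "((\<lambda>m. tf x 1 0 1 (2*m+1)) has_sum (x * S4)) UNIV" unfolding E by (rule has_sum_cmult_right[OF h4])
  qed
  have a2: "S2 = S3 - x * S4"
  proof -
    have "S2 = S3 + (- x) * S4"
    proof (rule parity_split[OF h2])
      have "(\<lambda>m. tf x 1 0 (-1) (2*m)) = tf x 4 0 1" by (rule ext) (rule tf_even, simp)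
      then show "((\<lambda>m. tf x 1 0 (-1) (2*m)) has_sum S3) UNIV" using h3 by simp
      have E: "(\<lambda>m. tf x 1 0 (-1) (2*m+1)) = (\<lambda>m. - x * tf x 4 4 1 m)" by (rule ext) (rule tf_odd2[OF x(2)])
      show "((\<lambda>m. tf x 1 0 (-1) (2*m+1)) has_sum (- x * S4)) UNIV" unfolding E by (rule has_sum_cmult_right[OF h4])
    qed
    then show ?thesis by (simp only: mult_minus_left diff_conv_add_uminus)
  qed
  have c: "S5 * S6 = X^2 + x * Y^2" by (rule double_identity[OF x(2) h5 h6 hX hY])
  have pr: "S4 * S3 * (S5 * S6)^2 = 2 * S1^2 * X^2 * Y^2"
    unfolding e1 e3 e4 e5 e6 eX eY by (rule prod_ident[OF x(1)])
  define V0 where "V0 = (\<Prod>m. (1 - qpow \<tau> (real (Suc m))) powi kron8 (Suc m))"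
  have V0: "V0 = Y / X"
  proof -
    have "V0 = (\<Prod>m. (1 - x^(Suc m)) powi kron8 (Suc m))" unfolding V0_def x_def qpow_nat[symmetric] ..
    also have "\<dots> = (Pm x 8 7 * Pm x 8 1) / (Pm x 8 5 * Pm x 8 3)" by (rule V_prod[OF x(1)])
    also have "\<dots> = Y / X" unfolding eX eY mult.assoc
      by (rule mult_divide_mult_cancel_left[symmetric]) (rule Pm_nz[OF x(1)], simp)
    finally show ?thesis .
  qed
  have v: "v_fun \<tau> ^ 2 = x * (Y / X)^2"
    unfolding v_fun_def V0_def[symmetric] V0 power_mult_distrib qpow_half x_def ..
  define T0 where "T0 = (\<Prod>m. ((1 - qpow (4 * \<tau>) (real (Suc m) / 2 - 1 / 4)) /
            (1 + qpow (4 * \<tau>) (real (Suc m) / 2 - 1 / 4))) ^ 2)"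
  have T0: "T0 = S2 / S1"
  proof -
    have "T0 = (\<Prod>m. ((1 - x^(2*m+1)) / (1 + x^(2*m+1)))^2)" unfolding T0_def x_def qpow_b ..
    also have "\<dots> = (Pm x 2 2 * Pm x 2 1 ^ 2) / (Pm x 2 2 * Pl x 2 1 ^ 2)" by (rule T_prod[OF x(1)])
    finally show ?thesis unfolding e1 e2 .
  qed
  have b: "b_fun (4 * \<tau>) = 2 * T0" unfolding b_fun_def T0_def ..
  have nz: "S1 \<noteq> 0" "S2 \<noteq> 0" "X \<noteq> 0" "S5 \<noteq> 0" "S6 \<noteq> 0"
    unfolding e1 e2 eX e5 e6 by (simp_all add: Pm_nz[OF x(1)] Pl_nz[OF x(1)])
  have F: "(v_fun \<tau> ^ 2 + 1)^2 / ((v_fun \<tau> ^ 2)^2 - 6 * v_fun \<tau> ^ 2 + 1) = 4 / (2 * T0)^2"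
    by (rule final_alg[OF x(2) nz a1 a2 c pr v T0])
  have P4: "v_fun \<tau> ^ 4 = (v_fun \<tau> ^ 2)^2" by (simp flip: power_mult)
  show ?thesis unfolding b P4 by (rule F)
qed

end
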